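(* Let $\mathcal{C}$ be a binary formally self-dual code of length $n$, and let $\Lambda_{\mathrm{A}}(\mathcal{C})$ be its Construction A lattice. Then for every $\tau>0$, $$\bigl[\Xi_{\Lambda_{\mathrm{A}}(\mathcal{C})}(\tau)\bigr]^{-1}=\frac{W_{\mathcal{C}}\bigl(\sqrt{1+t(\tau)},\sqrt{1-t(\tau)}\bigr)}{2^{n/2}},$$ where $t(\tau)=\vartheta_4^2(i\tau)/\vartheta_3^2(i\tau)$ satisfies $0<t(\tau)<1$. Moreover, defining $f_{\mathcal{C}}(t)=W_{\mathcal{C}}(\sqrt{1+t},\sqrt{1-t})$ for $0<t<1$, maximizing the secrecy function $\Xi_{\Lambda_{\mathrm{A}}(\mathcal{C})}(\tau)$ over $\tau>0$ is equivalent to determining the minimum of $f_{\mathcal{C}}(t)$ over $t\in(0,1)$ (via the correspondence $t=t(\tau)$).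
   Context: For a binary linear code $\mathcal{C}\subseteq\mathbb{F}_2^n$, $W_{\mathcal{C}}(x,y)=\sum_{w=0}^n A_w x^{n-w}y^w$ with $A_w$ the number of codewords of Hamming weight $w$; $\mathcal{C}$ is formally self-dual if $W_{\mathcal{C}}=W_{\mathcal{C}^\perp}$ (so $\dim\mathcal{C}=n/2$). Construction A: $\Lambda_{\mathrm{A}}(\mathcal{C})=\frac{1}{\sqrt2}(\phi(\mathcal{C})+2\mathbb{Z}^n)$, $\phi$ the natural embedding $\mathbb{F}_2^n\to\mathbb{R}^n$. Theta series: $\Theta_\Lambda(z)=\sum_{\boldsymbol{\lambda}\in\Lambda}e^{i\pi z\|\boldsymbol{\lambda}\|^2}$, $\operatorname{Im}z>0$. For a lattice of volume $\nu^n$ (volume $=|\det|$ of a generator matrix), the secrecy function is $\Xi_\Lambda(\tau)=\Theta_{\nu\mathbb{Z}^n}(i\tau)/\Theta_\Lambda(i\tau)$, $\tau>0$. Jacobi theta functions: $\vartheta_3(z)=\sum_{m\in\mathbb{Z}}e^{i\pi z m^2}$, $\vartheta_4(z)=\sum_{m\in\mathbb{Z}}(-1)^m e^{i\pi z m^2}$. *)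

theory Defs
  imports "HOL-Analysis.Analysis"
begin

text \<open>Binary words of length n = CARD('n): vectors bool^'n (True = 1 in F_2).\<close>

definition word_add :: "bool^'n \<Rightarrow> bool^'n \<Rightarrow> bool^'n" where
  "word_add x y = (\<chi> i. x$i \<noteq> y$i)"

definition zero_word :: "bool^'n" where
  "zero_word = (\<chi> i. False)"

definition hamming_weight :: "bool^'n \<Rightarrow> nat" where
  "hamming_weight x = card {i. x$i}"

definition binary_linear_code :: "(bool^'n) set \<Rightarrow> bool" where
  "binary_linear_code C \<longleftrightarrow> zero_word \<in> C \<and> (\<forall>x\<in>C. \<forall>y\<in>C. word_add x y \<in> C)"

definition dual_code :: "(bool^'n) set \<Rightarrow> (bool^'n) set" where
  "dual_code C = {y. \<forall>x\<in>C. even (card {i. x$i \<and> y$i})}"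

definition weight_dist :: "(bool^'n) set \<Rightarrow> nat \<Rightarrow> nat" where
  "weight_dist C w = card {c\<in>C. hamming_weight c = w}"

definition weight_enum :: "(bool^'n) set \<Rightarrow> real \<Rightarrow> real \<Rightarrow> real" where
  "weight_enum C x y =
     (\<Sum>w = 0..CARD('n). real (weight_dist C w) * x ^ (CARD('n) - w) * y ^ w)"

text \<open>Formally self-dual: W_C = W_{C^perp} as polynomials, i.e. equal weight distributions.\<close>
definition formally_self_dual :: "(bool^'n) set \<Rightarrow> bool" where
  "formally_self_dual C \<longleftrightarrow> binary_linear_code C \<and>
     (\<forall>w. weight_dist C w = weight_dist (dual_code C) w)"

definition embed_word :: "bool^'n \<Rightarrow> real^'n" where
  "embed_word c = (\<chi> i. if c$i then 1 else 0)"

definition int_vec :: "int^'n \<Rightarrow> real^'n" where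
  "int_vec z = (\<chi> i. of_int (z$i))"

definition constructionA :: "(bool^'n) set \<Rightarrow> (real^'n) set" where
  "constructionA C = {(1 / sqrt 2) *\<^sub>R (embed_word c + 2 *\<^sub>R int_vec z) | c z. c \<in> C}"

definition generator_matrix :: "real^'n^'n \<Rightarrow> (real^'n) set \<Rightarrow> bool" where
  "generator_matrix M L \<longleftrightarrow> invertible M \<and> L = range (\<lambda>z. int_vec z v* M)"

definition lattice_volume :: "(real^'n) set \<Rightarrow> real" where
  "lattice_volume L = \<bar>det (SOME M. generator_matrix M L)\<bar>"

definition scaled_Zn :: "real \<Rightarrow> (real^'n) set" where
  "scaled_Zn \<nu> = range (\<lambda>z. \<nu> *\<^sub>R int_vec z)"

definition theta_series :: "(real^'n) set \<Rightarrow> complex \<Rightarrow> complex" where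
  "theta_series L z = (\<Sum>\<^sub>\<infinity>l\<in>L. exp (\<i> * complex_of_real pi * z * complex_of_real ((norm l)\<^sup>2)))"

definition secrecy_function :: "(real^'n) set \<Rightarrow> real \<Rightarrow> complex" where
  "secrecy_function L \<tau> =
     theta_series (scaled_Zn (root CARD('n) (lattice_volume L)) :: (real^'n) set) (\<i> * complex_of_real \<tau>)
     / theta_series L (\<i> * complex_of_real \<tau>)"

definition jacobi_theta3 :: "complex \<Rightarrow> complex" where
  "jacobi_theta3 z = (\<Sum>\<^sub>\<infinity>m::int. exp (\<i> * complex_of_real pi * z * of_int (m\<^sup>2)))"

definition jacobi_theta4 :: "complex \<Rightarrow> complex" where
  "jacobi_theta4 z = (\<Sum>\<^sub>\<infinity>m::int. (-1) powi m * exp (\<i> * complex_of_real pi * z * of_int (m\<^sup>2)))"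

definition theta_ratio :: "real \<Rightarrow> complex" where
  "theta_ratio \<tau> = (jacobi_theta4 (\<i> * complex_of_real \<tau>))\<^sup>2 / (jacobi_theta3 (\<i> * complex_of_real \<tau>))\<^sup>2"

definition f_code :: "(bool^'n) set \<Rightarrow> real \<Rightarrow> real" where
  "f_code C t = weight_enum C (sqrt (1 + t)) (sqrt (1 - t))"

end

theory Submission
  imports Defs
begin

definition ee :: "real \<Rightarrow> real \<Rightarrow> real" where "ee u x = exp (-(pi*u*x^2))"
definition sg :: "int \<Rightarrow> real" where "sg m = (if even m then 1 else -1)"
definition T3 :: "real \<Rightarrow> real" where "T3 u = (\<Sum>\<^sub>\<infinity>m::int. ee u (of_int m))"
definition T4 :: "real \<Rightarrow> real" where "T4 u = (\<Sum>\<^sub>\<infinity>m::int. sg m * ee u (of_int m))"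
definition T2 :: "real \<Rightarrow> real" where "T2 u = (\<Sum>\<^sub>\<infinity>m::int. ee u (of_int m + 1/2))"

lemma ee_pos: "ee u x > 0" by (simp add: ee_def)

lemma summable_geo_int:
  fixes q :: real
  assumes "0 \<le> q" "q < 1"
  shows "(\<lambda>m::int. q ^ nat \<bar>m\<bar>) summable_on UNIV"
proof -
  have u: "(\<lambda>n::nat. q^n) summable_on UNIV"
    using summable_on_UNIV_nonneg_real_iff[of "\<lambda>n. q^n"] assms summable_geometric[of q] by simp
  have 1: "(\<lambda>m::int. q ^ nat \<bar>m\<bar>) summable_on range int"
    by (subst summable_on_reindex) (auto simp: inj_on_def o_def intro: u)
  have 2: "(\<lambda>m::int. q ^ nat \<bar>m\<bar>) summable_on range (\<lambda>n::nat. - int n)"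
    by (subst summable_on_reindex) (auto simp: inj_on_def o_def intro: u)
  have eq: "UNIV = range int \<union> range (\<lambda>n::nat. - int n)"
  proof -
    have "m \<in> range int \<union> range (\<lambda>n::nat. - int n)" for m :: int
    proof (cases "m \<ge> 0")
      case True then show ?thesis by (intro UnI1 image_eqI[of _ _ "nat m"]) auto
    next
      case False then show ?thesis by (intro UnI2 image_eqI[of _ _ "nat (-m)"]) auto
    qed
    then show ?thesis by blast
  qed
  show ?thesis using summable_on_union[OF 1 2] by (simp only: eq[symmetric])
qed

lemma int_abs_le_sq: "\<bar>m::int\<bar> \<le> m^2"
proof (cases "m = 0")
  case False
  then have "1 \<le> \<bar>m\<bar>" by linarith
  then have "\<bar>m\<bar> * 1 \<le> \<bar>m\<bar> * \<bar>m\<bar>" by (intro mult_left_mono) auto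
  then show ?thesis by (simp add: power2_eq_square abs_mult_self_eq)
qed simp

lemma ee_bound:
  assumes "u > 0"
  shows "ee u (of_int m) \<le> exp (-(pi*u)) ^ nat \<bar>m\<bar>"
proof -
  have "exp (-(pi*u)) ^ nat \<bar>m\<bar> = exp (of_nat (nat \<bar>m\<bar>) * (-(pi*u)))"
    by (rule exp_of_nat_mult[symmetric])
  then have e: "exp (-(pi*u)) ^ nat \<bar>m\<bar> = exp (-(pi*u*\<bar>real_of_int m\<bar>))"
    by (simp add: algebra_simps)
  have "\<bar>real_of_int m\<bar> \<le> (real_of_int m)^2"
    using int_abs_le_sq[of m] by (metis of_int_abs of_int_le_iff of_int_power)
  then have "pi*u*\<bar>real_of_int m\<bar> \<le> pi*u*(real_of_int m)^2"
    using assms by (intro mult_left_mono) auto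
  then show ?thesis unfolding e ee_def by simp
qed

lemma ee_summable:
  assumes "u > 0"
  shows "(\<lambda>m::int. ee u (of_int m)) summable_on UNIV"
  by (rule summable_on_comparison_test[OF summable_geo_int[of "exp (-(pi*u))"]])
     (use assms ee_bound[OF assms] in \<open>auto intro: less_imp_le[OF ee_pos]\<close>)

lemma half_ineq: "\<bar>x::real\<bar> - 1 \<le> (x + 1/2)^2"
proof -
  have a: "(x+1/2)^2 = x^2 + x + 1/4" by (simp add: power2_eq_square algebra_simps)
  have b: "0 \<le> (x+1)^2" by simp
  have c: "(x+1)^2 = x^2 + 2*x + 1" by (simp add: power2_eq_square algebra_simps)
  have d: "0 \<le> x^2" by simp
  show ?thesis
  proof (cases "x \<ge> 0")
    case True then show ?thesis using a d by linarith
  next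
    case False then show ?thesis using a b c by linarith
  qed
qed

lemma ee_half_bound:
  assumes "u > 0"
  shows "ee u (of_int m + 1/2) \<le> exp (pi*u) * exp (-(pi*u)) ^ nat \<bar>m\<bar>"
proof -
  have "exp (-(pi*u)) ^ nat \<bar>m\<bar> = exp (of_nat (nat \<bar>m\<bar>) * (-(pi*u)))"
    by (rule exp_of_nat_mult[symmetric])
  then have "exp (pi*u) * exp (-(pi*u)) ^ nat \<bar>m\<bar> = exp (pi*u) * exp (-(pi*u*\<bar>real_of_int m\<bar>))"
    by (simp add: algebra_simps)
  also have "\<dots> = exp (pi*u + (-(pi*u*\<bar>real_of_int m\<bar>)))" by (rule exp_add[symmetric])
  also have "pi*u + (-(pi*u*\<bar>real_of_int m\<bar>)) = -(pi*u*(\<bar>real_of_int m\<bar> - 1))" by (simp add: algebra_simps)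
  finally have e: "exp (pi*u) * exp (-(pi*u)) ^ nat \<bar>m\<bar> = exp (-(pi*u*(\<bar>real_of_int m\<bar> - 1)))" .
  have "\<bar>real_of_int m\<bar> - 1 \<le> (real_of_int m + 1/2)^2" by (rule half_ineq)
  then have "pi*u*(\<bar>real_of_int m\<bar> - 1) \<le> pi*u*(real_of_int m + 1/2)^2"
    using assms by (intro mult_left_mono) auto
  then show ?thesis unfolding e ee_def by simp
qed

lemma ee_half_summable:
  assumes "u > 0"
  shows "(\<lambda>m::int. ee u (of_int m + 1/2)) summable_on UNIV"
  by (rule summable_on_comparison_test[OF summable_on_cmult_right[OF summable_geo_int[of "exp (-(pi*u))"]]])
     (use assms ee_half_bound[OF assms] in \<open>auto intro: less_imp_le[OF ee_pos]\<close>)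

lemma abs_sg [simp]: "\<bar>sg m\<bar> = 1" by (simp add: sg_def)
lemma sg_add: "sg (a + b) = sg a * sg b" by (auto simp: sg_def)
lemma sg_diff: "sg (a - b) = sg a * sg b" by (auto simp: sg_def)

lemma abs_summable_real: "(f::'a\<Rightarrow>real) summable_on A \<Longrightarrow> (\<lambda>x. \<bar>f x\<bar>) summable_on A"
  using summable_on_iff_abs_summable_on_real by (metis real_norm_def summable_on_cong)

lemma has_sum_prod2:
  fixes f g :: "int \<Rightarrow> real"
  assumes f: "f summable_on UNIV" and g: "g summable_on UNIV"
  shows "((\<lambda>(m,k). f m * g k) has_sum (infsum f UNIV * infsum g UNIV)) UNIV"
proof -
  have fa: "(\<lambda>x. \<bar>f x\<bar>) summable_on UNIV" and ga: "(\<lambda>x. \<bar>g x\<bar>) summable_on UNIV"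
    using abs_summable_real f g by auto
  have "(\<lambda>(m,k). \<bar>f m\<bar> * \<bar>g k\<bar>) summable_on Sigma UNIV (\<lambda>_. UNIV)"
  proof (rule summable_on_SigmaI[where g = "\<lambda>m. \<bar>f m\<bar> * infsum (\<lambda>x. \<bar>g x\<bar>) UNIV"])
    fix m :: int
    show "((\<lambda>y. case (m, y) of (m, k) \<Rightarrow> \<bar>f m\<bar> * \<bar>g k\<bar>) has_sum \<bar>f m\<bar> * infsum (\<lambda>x. \<bar>g x\<bar>) UNIV) UNIV"
      using has_sum_cmult_right[OF has_sum_infsum[OF ga], of "\<bar>f m\<bar>"] by simp
  next
    show "(\<lambda>m. \<bar>f m\<bar> * infsum (\<lambda>x. \<bar>g x\<bar>) UNIV) summable_on UNIV"
      by (rule summable_on_cmult_left[OF fa])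
  qed auto
  then have "(\<lambda>p. \<bar>(case p of (m,k) \<Rightarrow> f m * g k)\<bar>) summable_on UNIV"
    by (simp add: case_prod_unfold abs_mult)
  then have u: "(\<lambda>(m,k). f m * g k) summable_on UNIV"
    using summable_on_iff_abs_summable_on_real by (metis real_norm_def summable_on_cong)
  show ?thesis
  proof -
    have "((\<lambda>(m,k). f m * g k) has_sum (infsum f UNIV * infsum g UNIV)) (Sigma UNIV (\<lambda>_. UNIV))"
    proof (rule has_sum_SigmaI[where g = "\<lambda>m. f m * infsum g UNIV"])
      fix m :: int
      show "((\<lambda>y. case (m, y) of (m, k) \<Rightarrow> f m * g k) has_sum f m * infsum g UNIV) UNIV"
        using has_sum_cmult_right[OF has_sum_infsum[OF g], of "f m"] by simp
    next
      show "((\<lambda>m. f m * infsum g UNIV) has_sum infsum f UNIV * infsum g UNIV) UNIV"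
        by (rule has_sum_cmult_left[OF has_sum_infsum[OF f]])
    next
      show "(\<lambda>(m,k). f m * g k) summable_on Sigma UNIV (\<lambda>_. UNIV)" using u by simp
    qed
    then show ?thesis by simp
  qed
qed

lemma summable_on_real_bound:
  fixes f g :: "'a \<Rightarrow> real"
  assumes "g summable_on A" "\<And>x. x \<in> A \<Longrightarrow> \<bar>f x\<bar> \<le> g x"
  shows "f summable_on A"
proof -
  have "(\<lambda>x. norm (f x)) summable_on A"
    by (rule summable_on_comparison_test[OF assms(1)]) (use assms(2) in auto)
  then show ?thesis using summable_on_iff_abs_summable_on_real[of f A] by simp
qed

lemma sg_ee_summable:
  assumes "u > 0"
  shows "(\<lambda>m::int. sg m * ee u (of_int m)) summable_on UNIV"
  by (rule summable_on_real_bound[OF ee_summable[OF assms]]) (simp add: abs_mult less_imp_le[OF ee_pos])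

lemma even_reindex:
  fixes G :: "int \<times> int \<Rightarrow> real"
  shows "((\<lambda>p. if even (fst p + snd p) then G p else 0) has_sum X) UNIV \<longleftrightarrow>
         ((\<lambda>(a,b). G (a+b, a-b)) has_sum X) UNIV"
proof -
  let ?E = "{p::int\<times>int. even (fst p + snd p)}"
  have "((\<lambda>p. if even (fst p + snd p) then G p else 0) has_sum X) UNIV \<longleftrightarrow> (G has_sum X) ?E"
    by (rule has_sum_cong_neutral) auto
  also have "\<dots> \<longleftrightarrow> ((\<lambda>(a,b). G (a+b, a-b)) has_sum X) UNIV"
  proof (rule has_sum_reindex_bij_witness[symmetric, where j = "\<lambda>(a,b). (a+b, a-b)"
        and i = "\<lambda>(m,k). ((m+k) div 2, (m-k) div 2)"])
    fix p :: "int\<times>int" assume "p \<in> ?E"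
    then obtain m k where p: "p = (m,k)" "even (m+k)" by (cases p) auto
    then have "(m+k) div 2 + (m-k) div 2 = m" "(m+k) div 2 - (m-k) div 2 = k" by presburger+
    then show "(case (case p of (m, k) \<Rightarrow> ((m + k) div 2, (m - k) div 2)) of (a, b) \<Rightarrow> (a + b, a - b)) = p"
      using p by simp
  next
    fix p :: "int\<times>int"
    obtain a b where p: "p = (a,b)" by (cases p)
    have "(a+b+(a-b)) div 2 = a" "(a+b-(a-b)) div 2 = b" by presburger+
    then show "(case (case p of (a, b) \<Rightarrow> (a + b, a - b)) of (m, k) \<Rightarrow> ((m + k) div 2, (m - k) div 2)) = p"
      using p by simp
    show "(case p of (a, b) \<Rightarrow> (a + b, a - b)) \<in> ?E" using p by (simp; presburger)
  qed auto
  finally show ?thesis .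
qed

lemma odd_reindex:
  fixes G :: "int \<times> int \<Rightarrow> real"
  shows "((\<lambda>p. if even (fst p + snd p) then 0 else G p) has_sum X) UNIV \<longleftrightarrow>
         ((\<lambda>(a,b). G (a+b+1, a-b)) has_sum X) UNIV"
proof -
  let ?E = "{p::int\<times>int. odd (fst p + snd p)}"
  have "((\<lambda>p. if even (fst p + snd p) then 0 else G p) has_sum X) UNIV \<longleftrightarrow> (G has_sum X) ?E"
    by (rule has_sum_cong_neutral) auto
  also have "\<dots> \<longleftrightarrow> ((\<lambda>(a,b). G (a+b+1, a-b)) has_sum X) UNIV"
  proof (rule has_sum_reindex_bij_witness[symmetric, where j = "\<lambda>(a,b). (a+b+1, a-b)"
        and i = "\<lambda>(m,k). ((m+k-1) div 2, (m-k-1) div 2)"])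
    fix p :: "int\<times>int" assume "p \<in> ?E"
    then obtain m k where p: "p = (m,k)" "odd (m+k)" by (cases p) auto
    then have "(m+k-1) div 2 + (m-k-1) div 2 + 1 = m" "(m+k-1) div 2 - (m-k-1) div 2 = k" by presburger+
    then show "(case (case p of (m, k) \<Rightarrow> ((m+k-1) div 2, (m-k-1) div 2)) of (a, b) \<Rightarrow> (a+b+1, a - b)) = p"
      using p by simp
  next
    fix p :: "int\<times>int"
    obtain a b where p: "p = (a,b)" by (cases p)
    have "(a+b+1+(a-b)-1) div 2 = a" "(a+b+1-(a-b)-1) div 2 = b" by presburger+
    then show "(case (case p of (a, b) \<Rightarrow> (a+b+1, a - b)) of (m, k) \<Rightarrow> ((m+k-1) div 2, (m-k-1) div 2)) = p"
      using p by simp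
    show "(case p of (a, b) \<Rightarrow> (a+b+1, a - b)) \<in> ?E" using p by (simp; presburger)
  qed auto
  finally show ?thesis .
qed

lemma ee_pair_even: "ee u (x+y) * ee u (x-y) = ee (2*u) x * ee (2*u) y"
proof -
  have "ee u (x+y) * ee u (x-y) = exp (-(pi*u*(x+y)^2) + -(pi*u*(x-y)^2))"
    unfolding ee_def by (rule exp_add[symmetric])
  also have "-(pi*u*(x+y)^2) + -(pi*u*(x-y)^2) = -(pi*(2*u)*x^2) + -(pi*(2*u)*y^2)"
    by (simp add: power2_eq_square algebra_simps)
  also have "exp \<dots> = ee (2*u) x * ee (2*u) y" unfolding ee_def by (rule exp_add)
  finally show ?thesis .
qed

lemma ee_pair_odd: "ee u (x+y+1) * ee u (x-y) = ee (2*u) (x+1/2) * ee (2*u) (y+1/2)"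
proof -
  have "ee u (x+y+1) * ee u (x-y) = exp (-(pi*u*(x+y+1)^2) + -(pi*u*(x-y)^2))"
    unfolding ee_def by (rule exp_add[symmetric])
  also have "-(pi*u*(x+y+1)^2) + -(pi*u*(x-y)^2) = -(pi*(2*u)*(x+1/2)^2) + -(pi*(2*u)*(y+1/2)^2)"
    by (simp add: power2_eq_square algebra_simps)
  also have "exp \<dots> = ee (2*u) (x+1/2) * ee (2*u) (y+1/2)" unfolding ee_def by (rule exp_add)
  finally show ?thesis .
qed

lemma sg_mult_even: "sg m * sg k = (if even (m+k) then 1 else -1)"
  by (auto simp: sg_def)

lemma T3_T4_sum:
  assumes u: "u > 0"
  shows "T3 u ^ 2 + T4 u ^ 2 = 2 * T3 (2*u) ^ 2"
proof -
  let ?e = "\<lambda>m::int. ee u (of_int m)"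
  let ?f = "\<lambda>m::int. sg m * ee u (of_int m)"
  have h1: "((\<lambda>(m,k). ?e m * ?e k) has_sum T3 u * T3 u) UNIV"
    using has_sum_prod2[OF ee_summable[OF u] ee_summable[OF u]] by (simp add: T3_def)
  have h2: "((\<lambda>(m,k). ?f m * ?f k) has_sum T4 u * T4 u) UNIV"
    using has_sum_prod2[OF sg_ee_summable[OF u] sg_ee_summable[OF u]] by (simp add: T4_def)
  have "((\<lambda>p. (case p of (m,k) \<Rightarrow> ?e m * ?e k) + (case p of (m,k) \<Rightarrow> ?f m * ?f k)) has_sum (T3 u * T3 u + T4 u * T4 u)) UNIV"
    by (rule has_sum_add[OF h1 h2])
  also have "(\<lambda>p. (case p of (m,k) \<Rightarrow> ?e m * ?e k) + (case p of (m,k) \<Rightarrow> ?f m * ?f k)) =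
      (\<lambda>p. if even (fst p + snd p) then 2 * ?e (fst p) * ?e (snd p) else 0)"
  proof
    fix p :: "int\<times>int"
    obtain m k where p: "p = (m,k)" by (cases p)
    have "?e m * ?e k + ?f m * ?f k = (1 + sg m * sg k) * ?e m * ?e k" by (simp add: algebra_simps)
    then show "(case p of (m,k) \<Rightarrow> ?e m * ?e k) + (case p of (m,k) \<Rightarrow> ?f m * ?f k) =
      (if even (fst p + snd p) then 2 * ?e (fst p) * ?e (snd p) else 0)"
      using p by (simp add: sg_mult_even)
  qed
  finally have "((\<lambda>(a,b). 2 * ee (2*u) (of_int a) * ee (2*u) (of_int b)) has_sum (T3 u * T3 u + T4 u * T4 u)) UNIV"
    unfolding even_reindex by (simp add: ee_pair_even mult.assoc)
  moreover have "((\<lambda>(a,b). 2 * ee (2*u) (of_int a) * ee (2*u) (of_int b)) has_sum (2 * (T3 (2*u) * T3 (2*u)))) UNIV"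
    using has_sum_cmult_right[OF has_sum_prod2[OF ee_summable ee_summable], of "2*u" "2*u" 2] u
    by (simp add: T3_def case_prod_unfold mult.assoc)
  ultimately show ?thesis using has_sum_unique by (fastforce simp: power2_eq_square)
qed

lemma T3_T4_diff:
  assumes u: "u > 0"
  shows "T3 u ^ 2 - T4 u ^ 2 = 2 * T2 (2*u) ^ 2"
proof -
  let ?e = "\<lambda>m::int. ee u (of_int m)"
  let ?f = "\<lambda>m::int. sg m * ee u (of_int m)"
  have h1: "((\<lambda>(m,k). ?e m * ?e k) has_sum T3 u * T3 u) UNIV"
    using has_sum_prod2[OF ee_summable[OF u] ee_summable[OF u]] by (simp add: T3_def)
  have h2: "((\<lambda>p. - (case p of (m,k) \<Rightarrow> ?f m * ?f k)) has_sum - (T4 u * T4 u)) UNIV"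
    using has_sum_prod2[OF sg_ee_summable[OF u] sg_ee_summable[OF u]] by (simp add: T4_def has_sum_uminus)
  have "((\<lambda>p. (case p of (m,k) \<Rightarrow> ?e m * ?e k) + - (case p of (m,k) \<Rightarrow> ?f m * ?f k)) has_sum (T3 u * T3 u + - (T4 u * T4 u))) UNIV"
    by (rule has_sum_add[OF h1 h2])
  also have "(\<lambda>p. (case p of (m,k) \<Rightarrow> ?e m * ?e k) + - (case p of (m,k) \<Rightarrow> ?f m * ?f k)) =
      (\<lambda>p. if even (fst p + snd p) then 0 else 2 * ?e (fst p) * ?e (snd p))"
  proof
    fix p :: "int\<times>int"
    obtain m k where p: "p = (m,k)" by (cases p)
    have "?e m * ?e k + - (?f m * ?f k) = (1 - sg m * sg k) * ?e m * ?e k" by (simp add: algebra_simps)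
    then show "(case p of (m,k) \<Rightarrow> ?e m * ?e k) + - (case p of (m,k) \<Rightarrow> ?f m * ?f k) =
      (if even (fst p + snd p) then 0 else 2 * ?e (fst p) * ?e (snd p))"
      using p by (simp add: sg_mult_even)
  qed
  finally have "((\<lambda>(a,b). 2 * ee (2*u) (of_int a + 1/2) * ee (2*u) (of_int b + 1/2)) has_sum (T3 u * T3 u + - (T4 u * T4 u))) UNIV"
    unfolding odd_reindex by (simp add: ee_pair_odd mult.assoc)
  moreover have "((\<lambda>(a,b). 2 * ee (2*u) (of_int a + 1/2) * ee (2*u) (of_int b + 1/2)) has_sum (2 * (T2 (2*u) * T2 (2*u)))) UNIV"
    using has_sum_cmult_right[OF has_sum_prod2[OF ee_half_summable ee_half_summable], of "2*u" "2*u" 2] u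
    by (simp add: T2_def case_prod_unfold mult.assoc)
  ultimately show ?thesis using has_sum_unique by (fastforce simp: power2_eq_square)
qed

lemma T3_T4_prod:
  assumes u: "u > 0"
  shows "T3 u * T4 u = T4 (2*u) ^ 2"
proof -
  let ?e = "\<lambda>m::int. ee u (of_int m)"
  let ?f = "\<lambda>m::int. sg m * ee u (of_int m)"
  have h1: "((\<lambda>(m,k). ?e m * ?f k) has_sum T3 u * T4 u) UNIV"
    using has_sum_prod2[OF ee_summable[OF u] sg_ee_summable[OF u]] by (simp add: T3_def T4_def)
  have h2: "((\<lambda>(m,k). ?f m * ?e k) has_sum T4 u * T3 u) UNIV"
    using has_sum_prod2[OF sg_ee_summable[OF u] ee_summable[OF u]] by (simp add: T3_def T4_def)
  have "((\<lambda>p. (case p of (m,k) \<Rightarrow> ?e m * ?f k) + (case p of (m,k) \<Rightarrow> ?f m * ?e k)) has_sum (T3 u * T4 u + T4 u * T3 u)) UNIV"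
    by (rule has_sum_add[OF h1 h2])
  also have "(\<lambda>p. (case p of (m,k) \<Rightarrow> ?e m * ?f k) + (case p of (m,k) \<Rightarrow> ?f m * ?e k)) =
      (\<lambda>p. if even (fst p + snd p) then 2 * sg (fst p) * ?e (fst p) * ?e (snd p) else 0)"
  proof
    fix p :: "int\<times>int"
    obtain m k where p: "p = (m,k)" by (cases p)
    have "?e m * ?f k + ?f m * ?e k = (sg k + sg m) * ?e m * ?e k" by (simp add: algebra_simps)
    moreover have "sg k + sg m = (if even (m+k) then 2 * sg m else 0)" by (auto simp: sg_def)
    ultimately show "(case p of (m,k) \<Rightarrow> ?e m * ?f k) + (case p of (m,k) \<Rightarrow> ?f m * ?e k) =
      (if even (fst p + snd p) then 2 * sg (fst p) * ?e (fst p) * ?e (snd p) else 0)"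
      using p by simp
  qed
  finally have "((\<lambda>(a,b). 2 * sg (a+b) * ee (2*u) (of_int a) * ee (2*u) (of_int b)) has_sum (T3 u * T4 u + T4 u * T3 u)) UNIV"
    unfolding even_reindex by (simp add: ee_pair_even mult.assoc)
  also have "(\<lambda>(a,b). 2 * sg (a+b) * ee (2*u) (of_int a) * ee (2*u) (of_int b)) =
      (\<lambda>(a,b). 2 * ((sg a * ee (2*u) (of_int a)) * (sg b * ee (2*u) (of_int b))))"
    by (auto simp: sg_add fun_eq_iff)
  finally have A: "((\<lambda>(a,b). 2 * ((sg a * ee (2*u) (of_int a)) * (sg b * ee (2*u) (of_int b)))) has_sum (T3 u * T4 u + T4 u * T3 u)) UNIV" .
  moreover have "((\<lambda>(a,b). 2 * ((sg a * ee (2*u) (of_int a)) * (sg b * ee (2*u) (of_int b)))) has_sum (2 * (T4 (2*u) * T4 (2*u)))) UNIV"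
    using has_sum_cmult_right[OF has_sum_prod2[OF sg_ee_summable sg_ee_summable], of "2*u" "2*u" 2] u
    by (simp add: T4_def case_prod_unfold)
  ultimately show ?thesis using has_sum_unique by (fastforce simp: power2_eq_square)
qed

lemma T3_ge1:
  assumes u: "u > 0" shows "T3 u \<ge> 1"
proof -
  have "sum (\<lambda>m::int. ee u (of_int m)) {0} \<le> T3 u"
    unfolding T3_def
    by (rule finite_sum_le_has_sum[OF has_sum_infsum[OF ee_summable[OF u]]]) (auto intro: less_imp_le[OF ee_pos])
  then show ?thesis by (simp add: ee_def)
qed

lemma T2_pos:
  assumes u: "u > 0" shows "T2 u > 0"
proof -
  have "sum (\<lambda>m::int. ee u (of_int m + 1/2)) {0} \<le> T2 u"
    unfolding T2_def
    by (rule finite_sum_le_has_sum[OF has_sum_infsum[OF ee_half_summable[OF u]]]) (auto intro: less_imp_le[OF ee_pos])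
  then show ?thesis using ee_pos[of u "1/2"] by simp
qed

lemma ee_double: "ee u (2*x) = ee (4*u) x"
  by (simp add: ee_def power2_eq_square algebra_simps)

lemma T4_eq:
  assumes u: "u > 0"
  shows "T4 u = 2 * T3 (4*u) - T3 u"
proof -
  have h: "((\<lambda>m::int. ee u (of_int m) + sg m * ee u (of_int m)) has_sum (T3 u + T4 u)) UNIV"
    unfolding T3_def T4_def
    by (rule has_sum_add[OF has_sum_infsum[OF ee_summable[OF u]] has_sum_infsum[OF sg_ee_summable[OF u]]])
  have eq: "(\<lambda>m::int. ee u (of_int m) + sg m * ee u (of_int m)) = (\<lambda>m. if even m then 2 * ee u (of_int m) else 0)"
    by (auto simp: sg_def fun_eq_iff)
  have "((\<lambda>m::int. if even m then 2 * ee u (of_int m) else 0) has_sum (T3 u + T4 u)) UNIV"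
    using h eq by simp
  then have "((\<lambda>m. 2 * ee u (of_int m)) has_sum (T3 u + T4 u)) {m::int. even m}"
    by (subst (asm) has_sum_cong_neutral[where T = "{m::int. even m}" and g = "\<lambda>m. 2 * ee u (of_int m)"]) auto
  also have "((\<lambda>m. 2 * ee u (of_int m)) has_sum (T3 u + T4 u)) {m::int. even m} \<longleftrightarrow>
        ((\<lambda>j::int. 2 * ee (4*u) (of_int j)) has_sum (T3 u + T4 u)) UNIV"
    by (rule has_sum_reindex_bij_witness[symmetric, where j = "\<lambda>j. 2*j" and i = "\<lambda>m. m div 2"])
       (auto simp: ee_double[symmetric])
  finally have "((\<lambda>j::int. 2 * ee (4*u) (of_int j)) has_sum (T3 u + T4 u)) UNIV" .
  moreover have "((\<lambda>j::int. 2 * ee (4*u) (of_int j)) has_sum (2 * T3 (4*u))) UNIV"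
    unfolding T3_def by (rule has_sum_cmult_right[OF has_sum_infsum[OF ee_summable]]) (use u in simp)
  ultimately have "T3 u + T4 u = 2 * T3 (4*u)" using has_sum_unique by blast
  then show ?thesis by simp
qed

lemma ee_mono: "a \<le> y \<Longrightarrow> ee y x \<le> ee a x"
  unfolding ee_def by (simp add: mult_right_mono mult_left_mono)

lemma T3_cont_atLeast:
  assumes a: "a > 0"
  shows "continuous_on {a..} T3"
proof -
  have ul: "uniform_limit {a..} (\<lambda>X y. \<Sum>x\<in>X. ee y (of_int x)) (\<lambda>y. \<Sum>\<^sub>\<infinity>x::int. ee y (of_int x)) (finite_subsets_at_top UNIV)"
  proof (rule Weierstrass_m_test_general[where M = "\<lambda>x. ee a (of_int x)"])
    fix x :: int and y :: real assume "y \<in> {a..}"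
    then have "a \<le> y" by simp
    then show "norm (ee y (of_int x)) \<le> ee a (of_int x)"
      by (simp add: abs_of_pos[OF ee_pos] ee_mono)
  next
    show "(\<lambda>x::int. ee a (of_int x)) summable_on UNIV" by (rule ee_summable[OF a])
  qed
  have "continuous_on {a..} (\<lambda>y. \<Sum>\<^sub>\<infinity>x::int. ee y (of_int x))"
    by (rule uniform_limit_theorem[OF _ ul]) (auto intro!: always_eventually continuous_intros simp: ee_def)
  then show ?thesis unfolding T3_def[abs_def] .
qed

lemma T3_cont: "continuous_on {0<..} T3"
proof (rule continuous_at_imp_continuous_on, intro ballI)
  fix x :: real assume "x \<in> {0<..}"
  then have x: "x > 0" by simp
  have "continuous_on {x/2..} T3" by (rule T3_cont_atLeast) (use x in simp)
  moreover have "x \<in> interior {x/2..}" using x by simp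
  ultimately show "isCont T3 x" by (rule continuous_on_interior)
qed

lemma T4_cont: "continuous_on {0<..} T4"
proof -
  have "continuous_on {0<..} (\<lambda>u. T3 (4*u))"
    by (rule continuous_on_compose2[OF T3_cont]) (auto intro!: continuous_intros)
  then have "continuous_on {0<..} (\<lambda>u. 2 * T3 (4*u) - T3 u)"
    by (intro continuous_intros T3_cont)
  then show ?thesis by (rule continuous_on_cong[THEN iffD1, rotated -1]) (auto simp: T4_eq)
qed

lemma T3_bound:
  assumes s: "v \<ge> 1"
  shows "T3 v \<le> 1 + exp (-(pi*(v-1))) * (T3 1 - 1)"
proof -
  define c where "c = exp (-(pi*(v-1)))"
  define h where "h m = c * ee 1 (of_int m) - ee v (of_int m)" for m :: int
  have hs: "(h has_sum (c * T3 1 - T3 v)) UNIV"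
  proof -
    have v0: "v > 0" using s by simp
    have a: "((\<lambda>m::int. c * ee 1 (of_int m)) has_sum (c * (\<Sum>\<^sub>\<infinity>m::int. ee 1 (of_int m)))) UNIV"
      by (rule has_sum_cmult_right[OF has_sum_infsum[OF ee_summable]]) simp
    have b: "((\<lambda>m::int. - ee v (of_int m)) has_sum (- (\<Sum>\<^sub>\<infinity>m::int. ee v (of_int m)))) UNIV"
      by (rule has_sum_uminusI[OF has_sum_infsum[OF ee_summable[OF v0]]])
    show ?thesis using has_sum_add[OF a b] by (simp add: h_def[abs_def] T3_def)
  qed
  have h0: "(h has_sum (c - 1)) {0}"
    using has_sum_finite[of "{0::int}" h] by (simp add: h_def ee_def)
  have hnn: "h m \<ge> 0" if "m \<noteq> 0" for m
  proof -
    have m1: "1 \<le> (real_of_int m)^2"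
      using that by (metis int_abs_le_sq le_less not_le of_int_1_le_iff of_int_power zabs_less_one_iff order_trans)
    have "exp (-(pi*(v-1)*(real_of_int m)^2)) * ee 1 (of_int m) = exp (-(pi*(v-1)*(real_of_int m)^2) + -(pi*1*(real_of_int m)^2))"
      unfolding ee_def by (rule exp_add[symmetric])
    also have "\<dots> = ee v (of_int m)" unfolding ee_def by (rule arg_cong[where f=exp]) (simp add: algebra_simps)
    finally have "ee v (of_int m) = exp (-(pi*(v-1)*(real_of_int m)^2)) * ee 1 (of_int m)" ..
    also have "exp (-(pi*(v-1)*(real_of_int m)^2)) \<le> c"
    proof -
      have "(v-1)*1 \<le> (v-1)*(real_of_int m)^2" by (rule mult_left_mono) (use s m1 in auto)
      then show ?thesis unfolding c_def by simp
    qed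
    then have "exp (-(pi*(v-1)*(real_of_int m)^2)) * ee 1 (of_int m) \<le> c * ee 1 (of_int m)"
      by (intro mult_right_mono less_imp_le[OF ee_pos])
    finally show ?thesis by (simp add: h_def)
  qed
  have "c - 1 \<le> c * T3 1 - T3 v"
    by (rule has_sum_mono'[OF h0 hs]) (auto intro: hnn)
  then show ?thesis unfolding c_def by (simp add: algebra_simps)
qed

lemma c_lim: "((\<lambda>v. exp (-(pi*(v-1)))) \<longlongrightarrow> 0) at_top"
proof -
  have "LIM v at_top. (v - 1::real) :> at_top"
    using filterlim_tendsto_add_at_top[OF tendsto_const[of "-1::real"] filterlim_ident[of "at_top::real filter"]] by simp
  then have "LIM v at_top. pi * (v - 1) :> at_top"
    by (rule filterlim_tendsto_pos_mult_at_top[OF tendsto_const pi_gt_zero])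
  then have "LIM v at_top. - (pi * (v - 1)) :> at_bot"
    by (subst filterlim_uminus_at_bot) simp
  then show ?thesis by (rule filterlim_compose[OF exp_at_bot])
qed

lemma T3_lim: "(T3 \<longlongrightarrow> 1) at_top"
proof (rule tendsto_sandwich[where f = "\<lambda>_. 1" and h = "\<lambda>v. 1 + exp (-(pi*(v-1))) * (T3 1 - 1)"])
  show "\<forall>\<^sub>F v in at_top. 1 \<le> T3 v"
    by (rule eventually_at_top_linorder[THEN iffD2]) (auto intro!: exI[of _ 1] T3_ge1)
  show "\<forall>\<^sub>F v in at_top. T3 v \<le> 1 + exp (-(pi*(v-1))) * (T3 1 - 1)"
    by (rule eventually_at_top_linorder[THEN iffD2]) (auto intro!: exI[of _ 1] T3_bound)
  show "((\<lambda>v. 1 + exp (-(pi*(v-1))) * (T3 1 - 1)) \<longlongrightarrow> 1) at_top"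
    using tendsto_add[OF tendsto_const[of 1] tendsto_mult[OF c_lim tendsto_const[of "T3 1 - 1"]]] by simp
qed simp

lemma T4_lim: "(T4 \<longlongrightarrow> 1) at_top"
proof -
  have "LIM v at_top. (4::real) * v :> at_top"
    using filterlim_tendsto_pos_mult_at_top[OF tendsto_const[of "4::real"] _ filterlim_ident[of "at_top::real filter"]] by simp
  then have l4: "((\<lambda>v. T3 (4 * v)) \<longlongrightarrow> 1) at_top" by (rule filterlim_compose[OF T3_lim])
  have "((\<lambda>v. 2 * T3 (4 * v) - T3 v) \<longlongrightarrow> 2 * 1 - 1) at_top"
    by (intro tendsto_intros l4 T3_lim)
  then have lim: "((\<lambda>v. 2 * T3 (4 * v) - T3 v) \<longlongrightarrow> 1) at_top" by simp
  have ev: "\<forall>\<^sub>F v in at_top. 2 * T3 (4 * v) - T3 v = T4 v"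
    by (rule eventually_at_top_linorder[THEN iffD2]) (auto intro!: exI[of _ 1] simp: T4_eq)
  from tendsto_cong[OF ev] lim show ?thesis by simp
qed

lemma key_ineq: fixes a b :: real assumes "0<a" "0 \<le> b" "b < a" shows "b/a \<le> 2*a*b/(a^2+b^2)"
proof -
  have "b*b^2 \<le> b*a^2" using assms by (intro mult_left_mono power_mono) auto
  then have "b*(a^2+b^2) \<le> 2*a*b*a" by (simp add: power2_eq_square algebra_simps)
  moreover have "a^2+b^2 > 0" using assms by (simp add: add_pos_nonneg)
  ultimately show ?thesis using assms by (simp add: divide_le_eq le_divide_eq mult.commute mult.left_commute)
qed

definition tt :: "real \<Rightarrow> real" where "tt u = (T4 u / T3 u)^2"

lemma T3_pos: "u > 0 \<Longrightarrow> T3 u > 0"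
  using T3_ge1[of u] by simp

lemma T4_nonneg:
  assumes u: "u > 0" shows "T4 u \<ge> 0"
proof -
  have "T3 u * T4 u \<ge> 0" using T3_T4_prod[OF u] by simp
  then show ?thesis using T3_pos[OF u] by (simp add: zero_le_mult_iff)
qed

lemma T4_lt:
  assumes u: "u > 0" shows "T4 u < T3 u"
proof (rule ccontr)
  assume "\<not> T4 u < T3 u"
  then have "T3 u ^ 2 \<le> T4 u ^ 2" using T3_pos[OF u] by (intro power_mono) auto
  moreover have "T2 (2*u) > 0" using T2_pos[of "2*u"] u by simp
  ultimately show False using T3_T4_diff[OF u] by (smt (verit) zero_less_power)
qed

lemma T4_pos:
  assumes u: "u > 0" shows "T4 u > 0"
proof (rule ccontr)
  assume "\<not> T4 u > 0"
  then have z0: "T4 u = 0" using T4_nonneg[OF u] by simp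
  have z: "T4 (2^k * u) = 0" for k :: nat
  proof (induction k)
    case 0 then show ?case using z0 by simp
  next
    case (Suc k)
    have p: "2^k * u > 0" using u by simp
    have "T4 (2 * (2^k * u)) ^ 2 = 0" using T3_T4_prod[OF p] Suc by simp
    then show ?case by (simp add: mult.assoc)
  qed
  have "\<forall>\<^sub>F v in at_top. 1/2 < T4 v" by (rule order_tendstoD(1)[OF T4_lim]) simp
  then obtain N where N: "\<And>v. v \<ge> N \<Longrightarrow> 1/2 < T4 v" by (auto simp: eventually_at_top_linorder)
  obtain k :: nat where k: "N/u < 2^k" using real_arch_pow[of 2 "N/u"] by auto
  then have "N \<le> 2^k * u" using u by (simp add: pos_divide_less_eq less_imp_le)
  then have "1/2 < T4 (2^k * u)" by (rule N)
  then show False using z[of k] by simp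
qed

lemma tt_pos: "u > 0 \<Longrightarrow> tt u > 0"
  unfolding tt_def using T4_pos[of u] T3_pos[of u] by simp

lemma tt_lt1: "u > 0 \<Longrightarrow> tt u < 1"
proof -
  assume u: "u > 0"
  have "T4 u / T3 u < 1" using T4_lt[OF u] T3_pos[OF u] by simp
  moreover have "T4 u / T3 u \<ge> 0" using T4_nonneg[OF u] T3_pos[OF u] by simp
  ultimately show "tt u < 1" unfolding tt_def by (simp add: power_less_one_iff)
qed

lemma tt_double:
  assumes u: "u > 0" shows "tt u \<le> (tt (2*u))^2"
proof -
  define a where "a = T3 u"
  define b where "b = T4 u"
  define A where "A = T3 (2*u)"
  define B where "B = T4 (2*u)"
  have a: "a > 0" and b: "b \<ge> 0" and ab: "b < a" and A: "A > 0"
    using T3_pos[OF u] T4_nonneg[OF u] T4_lt[OF u] T3_pos[of "2*u"] u by (auto simp: a_def b_def A_def)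
  have prod: "a * b = B^2" using T3_T4_prod[OF u] by (simp add: a_def b_def B_def)
  have sum: "a^2 + b^2 = 2 * A^2" using T3_T4_sum[OF u] by (simp add: a_def b_def A_def)
  have "(B/A)^2 = B^2 / A^2" by (simp add: power_divide)
  also have "\<dots> = 2*a*b/(a^2+b^2)" using A by (simp add: prod sum)
  finally have k1: "(B/A)^2 = 2*a*b/(a^2+b^2)" .
  have "b/a \<le> (B/A)^2" using key_ineq[OF a b ab] k1 by simp
  then have "(b/a)^2 \<le> ((B/A)^2)^2" using a b by (intro power_mono) auto
  then show ?thesis unfolding tt_def a_def b_def A_def B_def .
qed

lemma tt_nonneg: "tt u \<ge> 0" unfolding tt_def by simp

lemma tt_half_pow:
  assumes u: "u > 0" shows "tt (u / 2^k) \<le> tt u ^ (2^k)"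
proof (induction k)
  case 0 then show ?case by simp
next
  case (Suc k)
  have p: "u / 2^(Suc k) > 0" using u by simp
  have "tt (u / 2^(Suc k)) \<le> (tt (2 * (u / 2^(Suc k))))^2" by (rule tt_double[OF p])
  also have "2 * (u / 2^(Suc k)) = u / 2^k" by simp
  also have "(tt (u / 2^k))^2 \<le> (tt u ^ (2^k))^2" using Suc tt_nonneg by (intro power_mono) auto
  also have "(tt u ^ (2^k))^2 = tt u ^ (2^(Suc k))" by (simp add: power_mult[symmetric] mult.commute)
  finally show ?case .
qed

lemma tt_cont: "continuous_on {0<..} tt"
proof -
  have "continuous_on {0<..} (\<lambda>u. (T4 u / T3 u)^2)"
    by (intro continuous_intros T4_cont T3_cont) (auto dest: T3_pos)
  then show ?thesis unfolding tt_def[abs_def] .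
qed

lemma tt_small:
  assumes y: "y > 0" shows "\<exists>u>0. tt u < y"
proof -
  have t1: "tt 1 < 1" "tt 1 \<ge> 0" using tt_lt1[of 1] tt_nonneg by auto
  obtain k :: nat where k: "tt 1 ^ k < y" using real_arch_pow_inv[OF y t1(1)] by auto
  have "tt (1 / 2^k) \<le> tt 1 ^ (2^k)" by (rule tt_half_pow) simp
  also have "\<dots> \<le> tt 1 ^ k" using t1 by (intro power_decreasing) (auto intro: less_imp_le[OF less_exp])
  finally have "tt (1/2^k) < y" using k by simp
  then show ?thesis by (intro exI[of _ "1/2^k"]) simp
qed

lemma tt_lim: "(tt \<longlongrightarrow> 1) at_top"
proof -
  have "((\<lambda>u. (T4 u / T3 u)^2) \<longlongrightarrow> (1 / 1)^2) at_top"
    by (intro tendsto_intros T4_lim T3_lim) simp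
  then show ?thesis unfolding tt_def[abs_def] by simp
qed

lemma tt_large:
  assumes y: "y < 1" shows "\<exists>u>0. tt u > y"
proof -
  have "\<forall>\<^sub>F v in at_top. y < tt v" by (rule order_tendstoD(1)[OF tt_lim y])
  then obtain N where N: "\<And>v. v \<ge> N \<Longrightarrow> y < tt v" by (auto simp: eventually_at_top_linorder)
  show ?thesis by (intro exI[of _ "max N 1"]) (auto intro: N)
qed

lemma tt_image: "tt ` {0<..} = {0<..<1}"
proof
  show "tt ` {0<..} \<subseteq> {0<..<1}" using tt_pos tt_lt1 by auto
next
  show "{0<..<1} \<subseteq> tt ` {0<..}"
  proof
    fix y :: real assume "y \<in> {0<..<1}"
    then have y: "0 < y" "y < 1" by auto
    obtain a where a: "a > 0" "tt a < y" using tt_small[OF y(1)] by auto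
    obtain b where b: "b > 0" "tt b > y" using tt_large[OF y(2)] by auto
    show "y \<in> tt ` {0<..}"
    proof (cases "a \<le> b")
      case True
      have "continuous_on {a..b} tt" by (rule continuous_on_subset[OF tt_cont]) (use a in auto)
      then obtain x where "a \<le> x" "x \<le> b" "tt x = y" using IVT'[of tt a y b] a b True by auto
      then show ?thesis using a by (intro image_eqI[of _ _ x]) auto
    next
      case False
      have "continuous_on {b..a} tt" by (rule continuous_on_subset[OF tt_cont]) (use b in auto)
      then obtain x where "b \<le> x" "x \<le> a" "tt x = y" using IVT2'[of tt a y b] a b False by auto
      then show ?thesis using b by (intro image_eqI[of _ _ x]) auto
    qed
  qed
qed

definition ipc :: "bool^'n \<Rightarrow> bool^'n \<Rightarrow> nat" where "ipc c y = card {i. c$i \<and> y$i}"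
definition chi :: "bool^'n \<Rightarrow> bool^'n \<Rightarrow> int" where "chi c y = (if even (ipc c y) then 1 else -1)"

lemma lin_zero: "binary_linear_code C \<Longrightarrow> zero_word \<in> C"
  by (simp add: binary_linear_code_def)
lemma lin_add: "binary_linear_code C \<Longrightarrow> c \<in> C \<Longrightarrow> d \<in> C \<Longrightarrow> word_add c d \<in> C"
  by (simp add: binary_linear_code_def)

lemma finite_words [simp]: "finite (C :: (bool^'n) set)"
  by (rule finite_subset[OF subset_UNIV]) simp

lemma card_split: "finite A \<Longrightarrow> card A = card (A - B) + card (A \<inter> B)"
proof -
  assume f: "finite A"
  have "card ((A - B) \<union> (A \<inter> B)) = card (A - B) + card (A \<inter> B)"
    by (rule card_Un_disjoint) (use f in auto)
  moreover have "(A - B) \<union> (A \<inter> B) = A" by blast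
  ultimately show ?thesis by simp
qed

lemma ipc_add_parity:
  "even (ipc (word_add c d) y) \<longleftrightarrow> (even (ipc c y) \<longleftrightarrow> even (ipc d y))"
proof -
  define A where "A = {i. c$i \<and> y$i}"
  define B where "B = {i. d$i \<and> y$i}"
  have D: "{i. (word_add c d)$i \<and> y$i} = (A - B) \<union> (B - A)"
    by (auto simp: A_def B_def word_add_def)
  have "card ((A - B) \<union> (B - A)) = card (A - B) + card (B - A)"
    by (rule card_Un_disjoint) auto
  moreover have "card A = card (A - B) + card (A \<inter> B)" by (rule card_split) simp
  moreover have "card B = card (B - A) + card (B \<inter> A)" by (rule card_split) simp
  moreover have "B \<inter> A = A \<inter> B" by blast
  ultimately show ?thesis unfolding ipc_def D A_def[symmetric] B_def[symmetric] by auto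
qed

lemma ipc_sym: "ipc c y = ipc y c"
  unfolding ipc_def by (metis (mono_tags, lifting) Collect_cong)

lemma chi_add1: "chi (word_add c d) y = chi c y * chi d y"
  unfolding chi_def using ipc_add_parity[of c d y] by auto

lemma chi_add2: "chi c (word_add y e) = chi c y * chi c e"
  using chi_add1[of y e c] by (simp add: chi_def ipc_sym)

lemma word_add_cancel: "word_add (word_add y e) e = y"
  by (auto simp: word_add_def vec_eq_iff)

lemma word_add_self: "word_add c c = zero_word"
  by (simp add: word_add_def zero_word_def vec_eq_iff)

lemma sum_chi_UNIV:
  assumes "c \<noteq> zero_word"
  shows "(\<Sum>y\<in>UNIV. chi c y) = 0"
proof -
  obtain j where j: "c$j" using assms by (auto simp: zero_word_def vec_eq_iff)
  define e where "e = (\<chi> i. i = j)"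
  have ce: "chi c e = -1"
  proof -
    have "{i. c$i \<and> e$i} = {j}" using j by (auto simp: e_def)
    then show ?thesis by (simp add: chi_def ipc_def)
  qed
  have "(\<Sum>y\<in>UNIV. - chi c y) = (\<Sum>y\<in>UNIV. chi c y)"
    by (rule sum.reindex_bij_witness[where i = "\<lambda>y. word_add y e" and j = "\<lambda>y. word_add y e"])
       (auto simp: word_add_cancel chi_add2 ce)
  then show ?thesis by (simp add: sum_negf)
qed

lemma sum_chi_C:
  assumes C: "binary_linear_code C" and y: "y \<notin> dual_code C"
  shows "(\<Sum>c\<in>C. chi c y) = 0"
proof -
  obtain c0 where c0: "c0 \<in> C" "odd (ipc c0 y)" using y by (auto simp: dual_code_def ipc_def)
  have ce: "chi c0 y = -1" using c0 by (simp add: chi_def)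
  have "(\<Sum>c\<in>C. - chi c y) = (\<Sum>c\<in>C. chi c y)"
    by (rule sum.reindex_bij_witness[where i = "\<lambda>c. word_add c c0" and j = "\<lambda>c. word_add c c0"])
       (auto simp: word_add_cancel chi_add1 ce lin_add[OF C] c0)
  then show ?thesis by (simp add: sum_negf)
qed

lemma sum_chi_dual:
  assumes y: "y \<in> dual_code C"
  shows "(\<Sum>c\<in>C. chi c y) = int (card C)"
proof -
  have "(\<Sum>c\<in>C. chi c y) = (\<Sum>c\<in>C. 1)"
    by (rule sum.cong) (use y in \<open>auto simp: dual_code_def chi_def ipc_def\<close>)
  then show ?thesis by simp
qed

lemma card_words: "card (UNIV :: (bool^'n) set) = 2 ^ CARD('n)"
  using CARD_vec[where 'a = bool and 'b = 'n] by simp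

lemma card_C_dual:
  fixes C :: "(bool^'n::finite) set"
  assumes C: "binary_linear_code C"
  shows "card C * card (dual_code C) = 2 ^ CARD('n)"
proof -
  have "(\<Sum>y\<in>UNIV. \<Sum>c\<in>C. chi c y) = (\<Sum>y\<in>UNIV. if y \<in> dual_code C then int (card C) else 0)"
    by (rule sum.cong) (auto simp: sum_chi_dual sum_chi_C[OF C])
  also have "\<dots> = (\<Sum>y\<in>UNIV \<inter> dual_code C. int (card C))"
    by (rule sum.inter_restrict[symmetric]) simp
  also have "\<dots> = int (card (dual_code C)) * int (card C)" by simp
  finally have 1: "(\<Sum>y\<in>UNIV. \<Sum>c\<in>C. chi c y) = int (card (dual_code C)) * int (card C)" .
  have "(\<Sum>c\<in>C. \<Sum>y\<in>UNIV. chi c y) = (\<Sum>c\<in>C. if c = zero_word then int (2 ^ CARD('n)) else 0)"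
  proof (rule sum.cong)
    fix c assume "c \<in> C"
    show "(\<Sum>y\<in>UNIV. chi c y) = (if c = zero_word then int (2 ^ CARD('n)) else 0)"
    proof (cases "c = zero_word")
      case True
      then have "(\<Sum>y\<in>UNIV. chi c y) = (\<Sum>y\<in>(UNIV::(bool^'n) set). 1)"
        by (intro sum.cong) (auto simp: chi_def ipc_def zero_word_def)
      then show ?thesis using True card_words by simp
    qed (simp add: sum_chi_UNIV)
  qed simp
  also have "\<dots> = (\<Sum>c\<in>C \<inter> {zero_word}. int (2 ^ CARD('n)))"
    by (subst sum.inter_restrict) auto
  also have "C \<inter> {zero_word} = {zero_word}" using lin_zero[OF C] by auto
  finally have 2: "(\<Sum>c\<in>C. \<Sum>y\<in>UNIV. chi c y) = 2 ^ CARD('n)" by simp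
  have "int (card (dual_code C)) * int (card C) = 2 ^ CARD('n)"
  proof -
    have "(\<Sum>y\<in>UNIV. \<Sum>c\<in>C. chi c y) = (\<Sum>c\<in>C. \<Sum>y\<in>UNIV. chi c y)" by (rule sum.swap)
    then show ?thesis using 1 2 by simp
  qed
  then have "int (card C * card (dual_code C)) = int (2 ^ CARD('n))" by (simp add: mult.commute)
  then show ?thesis by (simp only: of_nat_eq_iff)
qed

lemma hw_le: "hamming_weight (c :: bool^'n) \<le> CARD('n)"
  unfolding hamming_weight_def by (rule card_mono) auto

lemma card_weight_sum: "card (C :: (bool^'n::finite) set) = (\<Sum>w = 0..CARD('n). weight_dist C w)"
proof -
  have "(\<Sum>w\<in>{0..CARD('n)}. sum (\<lambda>_. 1::nat) {c\<in>C. hamming_weight c = w}) = sum (\<lambda>_. 1) C"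
    by (rule sum.group) (auto simp: hw_le)
  then show ?thesis by (simp add: weight_dist_def)
qed

lemma fsd_card:
  assumes "formally_self_dual C"
  shows "card C = card (dual_code C)"
  using assms unfolding formally_self_dual_def
  by (simp add: card_weight_sum[of C] card_weight_sum[of "dual_code C"])

definition infoP :: "(bool^'n) set \<Rightarrow> 'n set \<Rightarrow> bool" where
  "infoP C I \<longleftrightarrow> (\<forall>v::'n\<Rightarrow>bool. \<exists>c\<in>C. \<forall>i\<in>I. c$i = v i)"

lemma info_exists:
  fixes C :: "(bool^'n::finite) set"
  assumes C: "binary_linear_code C"
  shows "\<exists>I. infoP C I \<and> (\<forall>c\<in>C. \<forall>d\<in>C. (\<forall>i\<in>I. c$i = d$i) \<longrightarrow> c = d)"
proof -
  have "infoP C {}" using lin_zero[OF C] by (auto simp: infoP_def)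
  moreover have "\<forall>I. infoP C I \<longrightarrow> card I < CARD('n) + 1"
  proof (intro allI impI)
    fix I :: "'n set"
    have "card I \<le> CARD('n)" by (rule card_mono) auto
    then show "card I < CARD('n) + 1" by simp
  qed
  ultimately obtain I where I: "infoP C I" and max: "\<And>J. infoP C J \<Longrightarrow> card J \<le> card I"
    using ex_has_greatest_nat[of "infoP C" "{}" card "CARD('n) + 1"] by blast
  have "\<forall>c\<in>C. \<forall>d\<in>C. (\<forall>i\<in>I. c$i = d$i) \<longrightarrow> c = d"
  proof (intro ballI impI, rule ccontr)
    fix c d assume c: "c \<in> C" and d: "d \<in> C" and agree: "\<forall>i\<in>I. c$i = d$i" and ne: "c \<noteq> d"
    define e where "e = word_add c d"
    have eC: "e \<in> C" using lin_add[OF C c d] by (simp add: e_def)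
    obtain j where j: "c$j \<noteq> d$j" using ne by (auto simp: vec_eq_iff)
    have jI: "j \<notin> I" using agree j by auto
    have ej: "e$j" using j by (simp add: e_def word_add_def)
    have eI: "\<forall>i\<in>I. \<not> e$i" using agree by (simp add: e_def word_add_def)
    have "infoP C (insert j I)"
      unfolding infoP_def
    proof
      fix v :: "'n \<Rightarrow> bool"
      obtain c1 where c1: "c1 \<in> C" "\<forall>i\<in>I. c1$i = v i" using I by (auto simp: infoP_def)
      show "\<exists>c\<in>C. \<forall>i\<in>insert j I. c$i = v i"
      proof (cases "c1$j = v j")
        case True then show ?thesis using c1 by auto
      next
        case False
        show ?thesis
          by (rule bexI[of _ "word_add c1 e"]) (use False c1 eI ej lin_add[OF C c1(1) eC] in \<open>auto simp: word_add_def\<close>)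
      qed
    qed
    then have "card (insert j I) \<le> card I" by (rule max)
    then show False using jI by (simp add: card_insert_if)
  qed
  then show ?thesis using I by blast
qed

lemma card_info:
  assumes I: "infoP C I" and inj: "\<forall>c\<in>C. \<forall>d\<in>C. (\<forall>i\<in>I. c$i = d$i) \<longrightarrow> c = d"
  shows "card C = 2 ^ card I"
proof -
  have "bij_betw (\<lambda>c. restrict (\<lambda>i. c$i) I) C (PiE I (\<lambda>_. UNIV :: bool set))"
  proof (rule bij_betw_imageI)
    show "inj_on (\<lambda>c. restrict (\<lambda>i. c$i) I) C"
    proof (rule inj_onI)
      fix c d assume "c \<in> C" "d \<in> C" "restrict (\<lambda>i. c$i) I = restrict (\<lambda>i. d$i) I"
      then show "c = d" using inj by (metis restrict_apply')
    qed
    show "(\<lambda>c. restrict (\<lambda>i. c$i) I) ` C = PiE I (\<lambda>_. UNIV)"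
    proof
      show "(\<lambda>c. restrict (\<lambda>i. c$i) I) ` C \<subseteq> PiE I (\<lambda>_. UNIV)" by auto
      show "PiE I (\<lambda>_. UNIV) \<subseteq> (\<lambda>c. restrict (\<lambda>i. c$i) I) ` C"
      proof
        fix f assume f: "f \<in> PiE I (\<lambda>_. UNIV :: bool set)"
        obtain c where c: "c \<in> C" "\<forall>i\<in>I. c$i = f i" using I by (auto simp: infoP_def)
        have "restrict (\<lambda>i. c$i) I = restrict f I" by (rule restrict_ext) (use c in auto)
        also have "\<dots> = f" by (rule PiE_restrict[OF f])
        finally show "f \<in> (\<lambda>c. restrict (\<lambda>i. c$i) I) ` C" using c by (intro image_eqI[of _ _ c]) auto
      qed
    qed
  qed
  then have "card C = card (PiE I (\<lambda>_. UNIV :: bool set))" by (rule bij_betw_same_card)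
  also have "\<dots> = 2 ^ card I" by (simp add: card_PiE)
  finally show ?thesis .
qed

lemma info_half:
  fixes C :: "(bool^'n::finite) set"
  assumes F: "formally_self_dual C" and I: "infoP C I" and inj: "\<forall>c\<in>C. \<forall>d\<in>C. (\<forall>i\<in>I. c$i = d$i) \<longrightarrow> c = d"
  shows "CARD('n) = 2 * card I"
proof -
  have C: "binary_linear_code C" using F by (simp add: formally_self_dual_def)
  have "card C * card C = 2 ^ CARD('n)" using card_C_dual[OF C] fsd_card[OF F] by simp
  then have "(2::nat) ^ (2 * card I) = 2 ^ CARD('n)" using card_info[OF I inj] by (simp add: power_add[symmetric] mult_2)
  then show ?thesis by (simp add: power_inject_exp)
qed

definition par :: "int^'n \<Rightarrow> bool^'n" where "par x = (\<chi> j. odd (x$j))"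
definition KK :: "(bool^'n) set \<Rightarrow> (int^'n) set" where "KK C = {x. par x \<in> C}"

definition bvec :: "(bool^'n) set \<Rightarrow> 'n set \<Rightarrow> 'n \<Rightarrow> bool^'n" where
  "bvec C I i = (SOME c. c \<in> C \<and> (\<forall>j\<in>I. c$j = (j = i)))"

definition Rrow :: "(bool^'n) set \<Rightarrow> 'n set \<Rightarrow> 'n \<Rightarrow> int^'n" where
  "Rrow C I i = (if i \<in> I then (\<chi> j. if bvec C I i $ j then 1 else 0) else (\<chi> j. if j = i then 2 else 0))"

definition combS :: "(bool^'n) set \<Rightarrow> 'n set \<Rightarrow> 'n set \<Rightarrow> int^'n \<Rightarrow> int^'n" where
  "combS C I S z = (\<chi> j. \<Sum>i\<in>S. z$i * Rrow C I i $ j)"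

definition Gm :: "(bool^'n) set \<Rightarrow> 'n set \<Rightarrow> real^'n^'n" where
  "Gm C I = (\<chi> i j. (1 / sqrt 2) * of_int (Rrow C I i $ j))"

definition good :: "(bool^'n) set \<Rightarrow> 'n set \<Rightarrow> bool" where
  "good C I \<longleftrightarrow> binary_linear_code C \<and> infoP C I \<and> (\<forall>c\<in>C. \<forall>d\<in>C. (\<forall>i\<in>I. c$i = d$i) \<longrightarrow> c = d)"

lemma bvec_prop:
  assumes "good C I"
  shows "bvec C I i \<in> C \<and> (\<forall>j\<in>I. bvec C I i $ j = (j = i))"
proof -
  have "\<forall>v. \<exists>c\<in>C. \<forall>j\<in>I. c$j = v j"
    using assms unfolding good_def infoP_def by simp
  from spec[OF this, of "\<lambda>j. j = i"]
  have "\<exists>c. c \<in> C \<and> (\<forall>j\<in>I. c$j = (j = i))" by auto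
  then show ?thesis unfolding bvec_def by (rule someI_ex)
qed

lemma K_add: "binary_linear_code C \<Longrightarrow> x \<in> KK C \<Longrightarrow> y \<in> KK C \<Longrightarrow> (\<chi> j. x$j + y$j) \<in> KK C"
proof -
  assume C: "binary_linear_code C" and x: "x \<in> KK C" and y: "y \<in> KK C"
  have "par (\<chi> j. x$j + y$j) = word_add (par x) (par y)"
    by (simp add: par_def word_add_def vec_eq_iff)
  then show ?thesis using lin_add[OF C] x y by (simp add: KK_def)
qed

lemma K_smul: "binary_linear_code C \<Longrightarrow> x \<in> KK C \<Longrightarrow> (\<chi> j. k * x$j) \<in> KK C"
proof -
  assume C: "binary_linear_code C" and x: "x \<in> KK C"
  show ?thesis
  proof (cases "even k")
    case True
    then have "par (\<chi> j. k * x$j) = zero_word" by (simp add: par_def zero_word_def vec_eq_iff)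
    then show ?thesis using lin_zero[OF C] by (simp add: KK_def)
  next
    case False
    then have "par (\<chi> j. k * x$j) = par x" by (simp add: par_def vec_eq_iff)
    then show ?thesis using x by (simp add: KK_def)
  qed
qed

lemma K_zero: "binary_linear_code C \<Longrightarrow> (0::int^'n) \<in> KK C"
proof -
  assume C: "binary_linear_code C"
  have "par (0::int^'n) = zero_word" by (simp add: par_def zero_word_def vec_eq_iff)
  then show ?thesis using lin_zero[OF C] by (simp add: KK_def)
qed

lemma Rrow_K:
  assumes g: "good C I" shows "Rrow C I i \<in> KK C"
proof (cases "i \<in> I")
  case True
  have "par (Rrow C I i) = bvec C I i" using True by (simp add: par_def Rrow_def vec_eq_iff)
  then show ?thesis using bvec_prop[OF g] by (simp add: KK_def)
next
  case False
  have "par (Rrow C I i) = zero_word" using False by (simp add: par_def Rrow_def zero_word_def vec_eq_iff)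
  moreover have "binary_linear_code C" using g by (simp add: good_def)
  ultimately show ?thesis using lin_zero by (simp add: KK_def)
qed

lemma combS_K:
  assumes g: "good C I" shows "combS C I S z \<in> KK C"
proof -
  have C: "binary_linear_code C" using g by (simp add: good_def)
  have "finite S" by simp
  then show ?thesis
  proof (induction S rule: finite_induct)
    case empty
    have e: "combS C I {} z = 0" by (simp add: combS_def vec_eq_iff)
    show ?case unfolding e by (rule K_zero[OF C])
  next
    case (insert i S)
    have "combS C I (insert i S) z = (\<chi> j. (z$i * Rrow C I i $ j) + combS C I S z $ j)"
      using insert.hyps by (simp add: combS_def vec_eq_iff)
    then show ?case
      using K_add[OF C K_smul[OF C Rrow_K[OF g, of i], of "z$i"] insert.IH] by simp
  qed
qed

lemma Rrow_I:
  assumes g: "good C I" and i: "i \<in> I" and j: "j \<in> I"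
  shows "Rrow C I i $ j = (if j = i then 1 else 0)"
  using bvec_prop[OF g, of i] i j by (simp add: Rrow_def)

lemma Rrow_notI: "i \<notin> I \<Longrightarrow> Rrow C I i $ j = (if j = i then 2 else 0)"
  by (simp add: Rrow_def)

lemma combS_surj:
  assumes g: "good C I" and x: "x \<in> KK C"
  shows "\<exists>z. combS C I UNIV z = x"
proof -
  have C: "binary_linear_code C" using g by (simp add: good_def)
  define y where "y = (\<chi> j. x$j + (-1) * combS C I I x $ j)"
  have yK: "y \<in> KK C"
    unfolding y_def using K_add[OF C x K_smul[OF C combS_K[OF g], of "-1"]] by simp
  have sumI: "(\<Sum>i\<in>I. x$i * Rrow C I i $ j) = x$j" if j: "j \<in> I" for j
  proof -
    have "(\<Sum>i\<in>I. x$i * Rrow C I i $ j) = (\<Sum>i\<in>I. if i = j then x$i else 0)"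
      by (rule sum.cong) (auto simp: Rrow_I[OF g _ j])
    also have "\<dots> = x$j" using j by simp
    finally show ?thesis .
  qed
  have y0: "y$j = 0" if "j \<in> I" for j using sumI[OF that] by (simp add: y_def combS_def)
  have "par y = zero_word"
  proof -
    have "par y \<in> C" using yK by (simp add: KK_def)
    moreover have "\<forall>i\<in>I. par y $ i = zero_word $ i" using y0 by (simp add: par_def zero_word_def)
    ultimately show ?thesis using g lin_zero[OF C] unfolding good_def by blast
  qed
  then have yeven: "even (y$j)" for j by (simp add: par_def zero_word_def vec_eq_iff)
  define z where "z = (\<chi> i. if i \<in> I then x$i else y$i div 2)"
  have "combS C I UNIV z = x"
  proof (subst vec_eq_iff, rule allI)
    fix j
    have e1: "combS C I UNIV z $ j = (\<Sum>i\<in>UNIV. (if i \<in> I then x$i else y$i div 2) * Rrow C I i $ j)"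
      by (simp add: combS_def z_def)
    have e2: "(\<Sum>i\<in>UNIV. (if i \<in> I then x$i else y$i div 2) * Rrow C I i $ j) =
        (\<Sum>i\<in>UNIV. if i \<in> I then x$i * Rrow C I i $ j else (if i = j then y$i div 2 * 2 else 0))"
      by (rule sum.cong) (auto simp: Rrow_notI)
    have e3: "(\<Sum>i\<in>UNIV. if i \<in> I then x$i * Rrow C I i $ j else (if i = j then y$i div 2 * 2 else 0)) =
        (\<Sum>i\<in>UNIV \<inter> {i. i \<in> I}. x$i * Rrow C I i $ j) + (\<Sum>i\<in>UNIV \<inter> - {i. i \<in> I}. (if i = j then y$i div 2 * 2 else 0))"
      by (rule sum.If_cases) simp
    have s1: "UNIV \<inter> {i. i \<in> I} = I" "UNIV \<inter> - {i. i \<in> I} = - I" by auto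
    have e4: "(\<Sum>i\<in>- I. (if i = j then y$i div 2 * 2 else 0)) = (if j \<in> - I then y$j div 2 * 2 else 0)"
      by (rule sum.delta) simp
    have e5: "(\<Sum>i\<in>I. x$i * Rrow C I i $ j) + (if j \<in> - I then y$j div 2 * 2 else 0) = x$j"
    proof (cases "j \<in> I")
      case True then show ?thesis using sumI[OF True] by simp
    next
      case False
      have "y$j div 2 * 2 = y$j" using yeven[of j] by simp
      then show ?thesis using False by (simp add: y_def combS_def)
    qed
    show "combS C I UNIV z $ j = x$j"
      unfolding e1 e2 e3 s1 e4 e5 ..
  qed
  then show ?thesis by blast
qed

lemma embed_int: "embed_word c + 2 *\<^sub>R int_vec z = int_vec (\<chi> j. (if c$j then 1 else 0) + 2 * z$j)"
  by (simp add: embed_word_def int_vec_def vec_eq_iff)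

lemma constructionA_K:
  assumes C: "binary_linear_code C"
  shows "constructionA C = (\<lambda>x. (1 / sqrt 2) *\<^sub>R int_vec x) ` KK C"
proof
  show "constructionA C \<subseteq> (\<lambda>x. (1 / sqrt 2) *\<^sub>R int_vec x) ` KK C"
  proof
    fix v assume "v \<in> constructionA C"
    then obtain c z where v: "v = (1 / sqrt 2) *\<^sub>R (embed_word c + 2 *\<^sub>R int_vec z)" and c: "c \<in> C"
      by (auto simp: constructionA_def)
    define x where "x = (\<chi> j. (if c$j then 1 else 0) + 2 * z$j)"
    have "par x = c" by (simp add: par_def x_def vec_eq_iff)
    then have "x \<in> KK C" using c by (simp add: KK_def)
    moreover have "v = (1 / sqrt 2) *\<^sub>R int_vec x" using v by (simp add: embed_int x_def)
    ultimately show "v \<in> (\<lambda>x. (1 / sqrt 2) *\<^sub>R int_vec x) ` KK C" by blast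
  qed
next
  show "(\<lambda>x. (1 / sqrt 2) *\<^sub>R int_vec x) ` KK C \<subseteq> constructionA C"
  proof
    fix v assume "v \<in> (\<lambda>x. (1 / sqrt 2) *\<^sub>R int_vec x) ` KK C"
    then obtain x where x: "x \<in> KK C" and v: "v = (1 / sqrt 2) *\<^sub>R int_vec x" by auto
    define z where "z = (\<chi> j. x$j div 2)"
    have xj: "x$j = (if odd (x$j) then 1 else 0) + 2 * (x$j div 2)" for j by presburger
    have "x = (\<chi> j. (if par x $ j then 1 else 0) + 2 * z$j)"
      using xj by (simp add: par_def z_def vec_eq_iff)
    then have "int_vec x = embed_word (par x) + 2 *\<^sub>R int_vec z"
      using embed_int[of "par x" z] by simp
    then have "v = (1 / sqrt 2) *\<^sub>R (embed_word (par x) + 2 *\<^sub>R int_vec z)"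
      using v by simp
    moreover have "par x \<in> C" using x by (simp add: KK_def)
    ultimately show "v \<in> constructionA C" by (auto simp: constructionA_def)
  qed
qed

lemma Gm_mult: "int_vec z v* Gm C I = (1 / sqrt 2) *\<^sub>R int_vec (combS C I UNIV z)"
proof (subst vec_eq_iff, rule allI)
  fix j
  have "(int_vec z v* Gm C I) $ j = (\<Sum>i\<in>UNIV. of_int (z$i) * ((1 / sqrt 2) * of_int (Rrow C I i $ j)))"
    by (simp add: vector_matrix_mult_def Gm_def int_vec_def)
  also have "\<dots> = (\<Sum>i\<in>UNIV. (1 / sqrt 2) * of_int (z$i * Rrow C I i $ j))"
    by (rule sum.cong) (simp_all add: mult.left_commute)
  also have "\<dots> = (1 / sqrt 2) * of_int (\<Sum>i\<in>UNIV. z$i * Rrow C I i $ j)"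
    by (simp add: sum_distrib_left of_int_sum)
  also have "\<dots> = ((1 / sqrt 2) *\<^sub>R int_vec (combS C I UNIV z)) $ j"
    by (simp add: int_vec_def combS_def)
  finally show "(int_vec z v* Gm C I) $ j = ((1 / sqrt 2) *\<^sub>R int_vec (combS C I UNIV z)) $ j" .
qed

lemma Gm_range:
  assumes g: "good C I"
  shows "range (\<lambda>z. int_vec z v* Gm C I) = constructionA C"
proof -
  have C: "binary_linear_code C" using g by (simp add: good_def)
  have "range (\<lambda>z. combS C I UNIV z) = KK C"
    using combS_K[OF g] combS_surj[OF g] by blast
  then have "(\<lambda>x. (1 / sqrt 2) *\<^sub>R int_vec x) ` range (\<lambda>z. combS C I UNIV z) = (\<lambda>x. (1 / sqrt 2) *\<^sub>R int_vec x) ` KK C"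
    by simp
  then have "range (\<lambda>z. int_vec z v* Gm C I) = (\<lambda>x. (1 / sqrt 2) *\<^sub>R int_vec x) ` KK C"
    unfolding Gm_mult image_image .
  then show ?thesis using constructionA_K[OF C] by simp
qed

lemma det_special:
  fixes A :: "real^'n^'n"
  assumes nz0: "\<And>i j. A$i$j \<noteq> 0 \<Longrightarrow> j = i \<or> (i \<in> I \<and> j \<notin> I)"
  shows "det A = (\<Prod>i\<in>UNIV. A$i$i)"
proof -
  have z: "(\<Prod>i\<in>UNIV. A$i$(p i)) = 0" if p: "p permutes UNIV" "p \<noteq> id" for p
  proof (rule ccontr)
    assume "(\<Prod>i\<in>UNIV. A$i$(p i)) \<noteq> 0"
    then have nz: "A$i$(p i) \<noteq> 0" for i using prod_zero_iff[of UNIV "\<lambda>i. A$i$(p i)"] by auto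
    have fix_out: "p i = i" if "i \<notin> I" for i using nz0[OF nz[of i]] that by auto
    have "p i = i" for i
    proof (cases "i \<in> I")
      case True
      show ?thesis
      proof (rule ccontr)
        assume ne: "p i \<noteq> i"
        then have "p i \<notin> I" using nz0[OF nz[of i]] by auto
        then have "p (p i) = p i" by (rule fix_out)
        then have "p i = i" using permutes_inj[OF p(1)] by (auto dest: injD)
        with ne show False by simp
      qed
    qed (rule fix_out)
    then have "p = id" by auto
    with p(2) show False by simp
  qed
  have r: "(\<Sum>p\<in>{p. p permutes (UNIV::'n set)}. of_int (sign p) * (\<Prod>i\<in>UNIV. A$i$(p i))) =
     of_int (sign (id::'n\<Rightarrow>'n)) * (\<Prod>i\<in>UNIV. A$i$(id i)) + (\<Sum>p\<in>{p. p permutes UNIV} - {id}. of_int (sign p) * (\<Prod>i\<in>UNIV. A$i$(p i)))"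
    by (rule sum.remove) (simp_all add: finite_permutations permutes_id)
  have r0: "(\<Sum>p\<in>{p. p permutes (UNIV::'n set)} - {id}. of_int (sign p) * (\<Prod>i\<in>UNIV. A$i$(p i))) = (0::real)"
    by (rule sum.neutral) (auto simp: z)
  show ?thesis unfolding det_def r r0 by (simp add: sign_id)
qed

lemma Gm_nz:
  assumes g: "good C I" and nz: "Gm C I $ i $ j \<noteq> 0"
  shows "j = i \<or> (i \<in> I \<and> j \<notin> I)"
proof (cases "i \<in> I")
  case True
  show ?thesis
  proof (cases "j \<in> I")
    case True2: True
    then show ?thesis using nz Rrow_I[OF g True True2] by (auto simp: Gm_def split: if_splits)
  qed (use True in auto)
next
  case False
  then show ?thesis using nz by (auto simp: Gm_def Rrow_notI split: if_splits)
qed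

lemma Gm_diag: "good C I \<Longrightarrow> Gm C I $ i $ i = (if i \<in> I then 1 / sqrt 2 else 2 / sqrt 2)"
  by (auto simp: Gm_def Rrow_I Rrow_notI)

lemma det_Gm:
  fixes I :: "'n::finite set"
  assumes g: "good C I" and half: "CARD('n) = 2 * card I"
  shows "det (Gm C I) = 1"
proof -
  have "det (Gm C I) = (\<Prod>i\<in>UNIV. Gm C I $ i $ i)"
    by (rule det_special[where I = I]) (rule Gm_nz[OF g])
  also have "\<dots> = (\<Prod>i\<in>UNIV. if i \<in> I then 1 / sqrt 2 else 2 / sqrt 2)"
    by (simp add: Gm_diag[OF g])
  also have "\<dots> = (\<Prod>i\<in>UNIV \<inter> {i. i \<in> I}. 1 / sqrt 2) * (\<Prod>i\<in>UNIV \<inter> - {i. i \<in> I}. 2 / sqrt 2)"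
    by (rule prod.If_cases) simp
  also have "\<dots> = (1 / sqrt 2) ^ card I * (2 / sqrt 2) ^ card (- I)"
    by (simp add: Compl_eq_Diff_UNIV)
  finally have p: "det (Gm C I) = (1 / sqrt 2) ^ card I * (2 / sqrt 2) ^ card (- I)" .
  have c: "card (- I) = card I"
  proof -
    have "card (- I) = card (UNIV - I)" by (simp add: Compl_eq_Diff_UNIV)
    also have "\<dots> = CARD('n) - card I" by (rule card_Diff_subset) simp_all
    finally show ?thesis using half by simp
  qed
  have q: "(1 / sqrt 2) ^ card I * (2 / sqrt 2) ^ card I = ((1 / sqrt 2) * (2 / sqrt 2)) ^ card I"
    by (rule power_mult_distrib[symmetric])
  have k: "(1 / sqrt 2) * (2 / sqrt 2) = (1::real)"
    by (simp add: field_simps)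
  show ?thesis unfolding p c q k by simp
qed

lemma unit_row: "int_vec (\<chi> k. if k = i then 1 else 0) v* A = (A :: real^'n^'n) $ i"
proof (subst vec_eq_iff, rule allI)
  fix j
  have "(int_vec (\<chi> k. if k = i then 1 else 0) v* A) $ j = (\<Sum>k\<in>UNIV. of_int (if k = i then 1 else 0) * A$k$j)"
    by (simp add: vector_matrix_mult_def int_vec_def)
  also have "\<dots> = (\<Sum>k\<in>UNIV. if k = i then A$k$j else 0)"
    by (rule sum.cong) auto
  also have "\<dots> = A$i$j" by simp
  finally show "(int_vec (\<chi> k. if k = i then 1 else 0) v* A) $ j = A$i$j" .
qed

lemma det_of_int: "det (\<chi> i j. (of_int (X$i$j) :: real)) = of_int (det X)"
  by (simp add: det_def of_int_sum of_int_mult of_int_prod)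

lemma gen_factor:
  assumes A: "generator_matrix A L" and B: "generator_matrix B L"
  shows "\<exists>X::int^'n^'n. det A = of_int (det X) * det (B :: real^'n^'n)"
proof -
  have "\<forall>i. \<exists>u. A$i = int_vec u v* B"
  proof
    fix i
    have "A$i \<in> range (\<lambda>z. int_vec z v* A)" using unit_row[of i A] by (metis rangeI)
    also have "range (\<lambda>z. int_vec z v* A) = range (\<lambda>z. int_vec z v* B)"
      using A B by (simp add: generator_matrix_def)
    finally show "\<exists>u. A$i = int_vec u v* B" by auto
  qed
  then obtain U where U: "\<And>i. A$i = int_vec (U i) v* B" by metis
  define X :: "int^'n^'n" where "X = (\<chi> i. U i)"
  have "A = (\<chi> i j. (of_int (X$i$j) :: real)) ** B"
  proof (subst vec_eq_iff, rule allI, subst vec_eq_iff, rule allI)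
    fix i j
    have "A$i$j = (int_vec (U i) v* B) $ j" using U by simp
    also have "\<dots> = ((\<chi> i j. (of_int (X$i$j) :: real)) ** B) $ i $ j"
      by (simp add: vector_matrix_mult_def matrix_matrix_mult_def int_vec_def X_def)
    finally show "A$i$j = ((\<chi> i j. (of_int (X$i$j) :: real)) ** B) $ i $ j" .
  qed
  then have "det A = det (\<chi> i j. (of_int (X$i$j) :: real)) * det B" by (metis det_mul)
  then show ?thesis by (auto simp: det_of_int)
qed

lemma gen_det_eq:
  assumes A: "generator_matrix A L" and B: "generator_matrix B L"
  shows "\<bar>det A\<bar> = \<bar>det (B :: real^'n^'n)\<bar>"
proof -
  obtain X :: "int^'n^'n" where X: "det A = of_int (det X) * det B" using gen_factor[OF A B] by blast
  obtain Y :: "int^'n^'n" where Y: "det B = of_int (det Y) * det A" using gen_factor[OF B A] by blast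
  have nz: "det A \<noteq> 0" using A by (simp add: generator_matrix_def invertible_det_nz)
  have "det A = of_int (det X * det Y) * det A" using X Y by simp
  then have "of_int (det X * det Y) = (1::real)" using nz by simp
  then have "det X * det Y = 1" by (metis of_int_eq_1_iff)
  then have "\<bar>det X\<bar> = 1" by (auto simp: zmult_eq_1_iff)
  then have "\<bar>of_int (det X) :: real\<bar> = 1" by (metis of_int_1 of_int_abs)
  then show ?thesis using X by (simp add: abs_mult)
qed

lemma vol_one:
  fixes C :: "(bool^'n::finite) set"
  assumes F: "formally_self_dual C"
  shows "lattice_volume (constructionA C) = 1"
proof -
  have C: "binary_linear_code C" using F by (simp add: formally_self_dual_def)
  obtain I where I: "infoP C I" and inj: "\<forall>c\<in>C. \<forall>d\<in>C. (\<forall>i\<in>I. c$i = d$i) \<longrightarrow> c = d"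
    using info_exists[OF C] by blast
  have g: "good C I" using C I inj by (simp add: good_def)
  have half: "CARD('n) = 2 * card I" by (rule info_half[OF F I inj])
  have d: "det (Gm C I) = 1" by (rule det_Gm[OF g half])
  have gen: "generator_matrix (Gm C I) (constructionA C)"
    using d Gm_range[OF g] by (simp add: generator_matrix_def invertible_det_nz)
  then have gen2: "generator_matrix (SOME M. generator_matrix M (constructionA C)) (constructionA C)"
    by (rule someI)
  show ?thesis unfolding lattice_volume_def using gen_det_eq[OF gen2 gen] d by simp
qed

lemma bij_vec_nth: "bij_betw (vec_nth :: 'a^'n \<Rightarrow> 'n \<Rightarrow> 'a) UNIV UNIV"
  by (rule bij_betw_byWitness[where f' = vec_lambda]) (auto simp: vec_nth_inverse vec_lambda_inverse)

lemma has_sum_vec_prod: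
  fixes g :: "'n::finite \<Rightarrow> int \<Rightarrow> real"
  assumes pos: "\<And>j m. g j m > 0" and sm: "\<And>j. g j summable_on UNIV"
  shows "((\<lambda>z::int^'n. \<Prod>j\<in>UNIV. g j (z$j)) has_sum (\<Prod>j\<in>UNIV. infsum (g j) UNIV)) UNIV"
proof -
  have abs: "(\<lambda>m. \<bar>g j m\<bar>) summable_on UNIV" for j
  proof -
    have "(\<lambda>m. \<bar>g j m\<bar>) = g j" using pos by (auto simp: fun_eq_iff less_imp_le)
    then show ?thesis using sm[of j] by simp
  qed
  have eq: "infsum (\<lambda>f. \<Prod>j\<in>UNIV. g j (f j)) (PiE UNIV (\<lambda>_. UNIV)) = (\<Prod>j\<in>UNIV. infsum (g j) UNIV)"
    by (rule infsum_prod_PiE_abs) (simp_all add: abs)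
  have ipos: "infsum (g j) UNIV > 0" for j
  proof -
    have "sum (g j) {0} \<le> infsum (g j) UNIV"
      by (rule finite_sum_le_has_sum[OF has_sum_infsum[OF sm]]) (auto intro: less_imp_le[OF pos])
    then show ?thesis using pos[of j 0] by simp
  qed
  have "(\<Prod>j\<in>UNIV. infsum (g j) UNIV) > 0" by (rule prod_pos) (simp add: ipos)
  then have "(\<lambda>f. \<Prod>j\<in>UNIV. g j (f j)) summable_on UNIV"
    using eq infsum_not_exists by fastforce
  then have "((\<lambda>f. \<Prod>j\<in>UNIV. g j (f j)) has_sum (\<Prod>j\<in>UNIV. infsum (g j) UNIV)) UNIV"
    using eq by (metis PiE_UNIV has_sum_infsum)
  then show ?thesis
    using has_sum_reindex_bij_betw[OF bij_vec_nth, of "\<lambda>f. \<Prod>j\<in>UNIV. g j (f j)"] by simp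
qed

lemma ee_shift_summable:
  assumes s: "u > 0" and a: "a = 0 \<or> a = 1/2"
  shows "(\<lambda>m::int. ee u (of_int m + a)) summable_on UNIV"
proof (cases "a = 0")
  case True then show ?thesis using ee_summable[OF s] by simp
next
  case False then have "a = 1/2" using a by simp
  then show ?thesis using ee_half_summable[OF s] by (simp only:)
qed

lemma theta_shift:
  fixes a :: "'n::finite \<Rightarrow> real"
  assumes s: "u > 0" and a: "\<And>j. a j = 0 \<or> a j = 1/2"
  shows "((\<lambda>z::int^'n. \<Prod>j\<in>UNIV. ee u (of_int (z$j) + a j)) has_sum
           (\<Prod>j\<in>UNIV. infsum (\<lambda>m::int. ee u (of_int m + a j)) UNIV)) UNIV"
  by (rule has_sum_vec_prod[where g = "\<lambda>j m. ee u (of_int m + a j)"]) (auto intro: ee_pos ee_shift_summable[OF s a])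

lemma norm_sq_vec: "(norm (v::real^'n))^2 = (\<Sum>j\<in>UNIV. (v$j)^2)"
proof -
  have "(norm v)^2 = v \<bullet> v" by (rule power2_norm_eq_inner)
  also have "\<dots> = (\<Sum>j\<in>UNIV. (v$j)^2)" by (simp add: inner_vec_def power2_eq_square)
  finally show ?thesis .
qed

lemma exp_neg_sum: "exp (-(pi * u * (\<Sum>j\<in>UNIV. t j))) = (\<Prod>j\<in>(UNIV::'n::finite set). exp (-(pi * u * t j)))"
proof -
  have "-(pi * u * (\<Sum>j\<in>UNIV. t j)) = (\<Sum>j\<in>(UNIV::'n set). -(pi * u * t j))"
    by (simp add: sum_distrib_left sum_negf)
  then show ?thesis by (simp add: exp_sum)
qed

lemma cexp_term: "exp (\<i> * complex_of_real pi * (\<i> * complex_of_real u) * complex_of_real r) = complex_of_real (exp (-(pi*u*r)))"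
proof -
  have e: "\<i> * complex_of_real pi * (\<i> * complex_of_real u) * complex_of_real r = complex_of_real (-(pi*u*r))"
    by (simp add: mult_ac)
  show ?thesis by (simp only: e exp_of_real)
qed

lemma infsum_of_real_has_sum:
  assumes "(f has_sum x) A"
  shows "infsum (\<lambda>a. complex_of_real (f a)) A = complex_of_real x"
  by (rule infsumI[OF has_sum_of_real[OF assms]])

lemma powi_minus_one: "(-1::complex) powi m = complex_of_real (sg m)"
proof (cases "m \<ge> 0")
  case True
  then obtain n where n: "m = int n" by (metis nonneg_int_cases)
  show ?thesis by (simp add: n power_int_of_nat minus_one_power_iff sg_def)
next
  case False
  then obtain n where n: "m = - int n" by (metis nonneg_int_cases neg_0_le_iff_le le_cases minus_minus)
  have "(-1::complex) powi m = (-1) powi (int n)" by (simp add: n power_int_minus_one_minus)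
  then show ?thesis by (simp add: n power_int_of_nat minus_one_power_iff sg_def)
qed

lemma theta3_real:
  assumes u: "u > 0"
  shows "jacobi_theta3 (\<i> * complex_of_real u) = complex_of_real (T3 u)"
proof -
  have "jacobi_theta3 (\<i> * complex_of_real u) = (\<Sum>\<^sub>\<infinity>m::int. complex_of_real (ee u (of_int m)))"
    unfolding jacobi_theta3_def
    using cexp_term[of u "of_int (m^2)" for m] by (simp add: ee_def)
  also have "\<dots> = complex_of_real (T3 u)"
    unfolding T3_def by (rule infsum_of_real_has_sum[OF has_sum_infsum[OF ee_summable[OF u]]])
  finally show ?thesis .
qed

lemma theta4_real:
  assumes u: "u > 0"
  shows "jacobi_theta4 (\<i> * complex_of_real u) = complex_of_real (T4 u)"
proof -
  have "jacobi_theta4 (\<i> * complex_of_real u) = (\<Sum>\<^sub>\<infinity>m::int. complex_of_real (sg m * ee u (of_int m)))"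
    unfolding jacobi_theta4_def
    using cexp_term[of u "of_int (m^2)" for m] by (simp add: ee_def powi_minus_one)
  also have "\<dots> = complex_of_real (T4 u)"
    unfolding T4_def by (rule infsum_of_real_has_sum[OF has_sum_infsum[OF sg_ee_summable[OF u]]])
  finally show ?thesis .
qed

lemma theta_ratio_real:
  assumes u: "u > 0"
  shows "theta_ratio u = complex_of_real (tt u)"
  unfolding theta_ratio_def tt_def theta3_real[OF u] theta4_real[OF u]
  by (simp add: power_divide)

definition Phi :: "bool^'n \<Rightarrow> int^'n \<Rightarrow> real^'n" where
  "Phi c z = (1 / sqrt 2) *\<^sub>R (embed_word c + 2 *\<^sub>R int_vec z)"

lemma Phi_comp: "(Phi c z)$j = (1 / sqrt 2) * ((if c$j then 1 else 0) + 2 * real_of_int (z$j))"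
  by (simp add: Phi_def embed_word_def int_vec_def)

lemma parity_real:
  assumes h: "(if p then 1 else 0) + 2 * real_of_int a = (if q then 1 else 0) + 2 * real_of_int b"
  shows "p = q \<and> a = b"
proof -
  have "real_of_int ((if p then 1 else 0) + 2*a) = real_of_int ((if q then 1 else 0) + 2*b)"
    using h by (cases p; cases q) simp_all
  then have ie: "(if p then 1 else 0) + 2*a = (if q then 1 else (0::int)) + 2*b"
    by (simp only: of_int_eq_iff)
  show ?thesis
  proof (cases p)
    case True
    show ?thesis
    proof (cases q)
      case True with \<open>p\<close> ie show ?thesis by simp
    next
      case False
      with \<open>p\<close> ie have "1 + 2*a = 2*b" by simp
      then have False by presburger
      then show ?thesis ..
    qed
  next
    case False
    show ?thesis
    proof (cases q)
      case True
      with \<open>\<not>p\<close> ie have "2*a = 1 + 2*b" by simp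
      then have False by presburger
      then show ?thesis ..
    next
      case False with \<open>\<not>p\<close> ie show ?thesis by simp
    qed
  qed
qed

lemma Phi_eq:
  assumes "Phi c z = Phi c' z'"
  shows "c = c' \<and> z = z'"
proof -
  have "c$j = c'$j \<and> z$j = z'$j" for j
  proof -
    have "(Phi c z)$j = (Phi c' z')$j" using assms by simp
    then have "(1 / sqrt 2) * ((if c$j then 1 else 0) + 2 * real_of_int (z$j)) = (1 / sqrt 2) * ((if c'$j then 1 else 0) + 2 * real_of_int (z'$j))"
      by (simp only: Phi_comp)
    then have "(if c$j then 1 else 0) + 2 * real_of_int (z$j) = (if c'$j then 1 else 0) + 2 * real_of_int (z'$j)"
      by (simp only: mult_cancel_left) simp
    then show ?thesis by (rule parity_real)
  qed
  then show ?thesis by (simp add: vec_eq_iff)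
qed

lemma inj_int_vec: "inj (int_vec :: int^'n \<Rightarrow> real^'n)"
  by (rule injI) (simp add: int_vec_def vec_eq_iff)

lemma sq_half: "((1 / sqrt 2) * x)^2 = x^2 / 2"
  by (simp add: power_mult_distrib power_divide)

lemma Phi_term:
  "exp (-(pi * u * (norm (Phi c z))^2)) = (\<Prod>j\<in>UNIV. ee (2*u) (of_int (z$j) + (if c$j then 1/2 else 0)))"
proof -
  have "exp (-(pi * u * (norm (Phi c z))^2)) = (\<Prod>j\<in>UNIV. exp (-(pi * u * ((Phi c z)$j)^2)))"
    unfolding norm_sq_vec by (rule exp_neg_sum)
  also have "\<dots> = (\<Prod>j\<in>UNIV. ee (2*u) (of_int (z$j) + (if c$j then 1/2 else 0)))"
  proof (rule prod.cong)
    fix j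
    have "((Phi c z)$j)^2 = ((if c$j then 1 else 0) + 2 * real_of_int (z$j))^2 / 2"
      unfolding Phi_comp sq_half ..
    also have "\<dots> = 2 * (of_int (z$j) + (if c$j then 1/2 else 0))^2"
      by (cases "c$j") (simp_all add: power2_eq_square algebra_simps)
    finally show "exp (-(pi * u * ((Phi c z)$j)^2)) = ee (2*u) (of_int (z$j) + (if c$j then 1/2 else 0))"
      by (simp add: ee_def mult_ac)
  qed simp
  finally show ?thesis .
qed

lemma Z_term:
  "exp (-(pi * u * (norm (int_vec z :: real^'n::finite))^2)) = (\<Prod>j\<in>UNIV. ee u (of_int (z$j)))"
  unfolding norm_sq_vec exp_neg_sum by (simp add: ee_def int_vec_def)

lemma theta_term_eq:
  "(\<lambda>l. exp (\<i> * complex_of_real pi * (\<i> * complex_of_real u) * complex_of_real ((norm l)\<^sup>2))) =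
   (\<lambda>l. complex_of_real (exp (-(pi * u * (norm l)^2))))"
  by (rule ext) (rule cexp_term)

lemma Z_theta_real:
  assumes u: "u > 0"
  shows "((\<lambda>l. exp (-(pi * u * (norm l)^2))) has_sum T3 u ^ CARD('n::finite)) (range (int_vec :: int^'n \<Rightarrow> real^'n))"
proof -
  have a0: "\<And>j::'n. (\<lambda>_. 0::real) j = 0 \<or> (\<lambda>_. 0::real) j = 1/2" by simp
  have "((\<lambda>z::int^'n. \<Prod>j\<in>UNIV. ee u (of_int (z$j))) has_sum
           (\<Prod>j\<in>(UNIV::'n set). infsum (\<lambda>m::int. ee u (of_int m)) UNIV)) UNIV"
    using theta_shift[OF u a0] by simp
  then have "(((\<lambda>l. exp (-(pi * u * (norm l)^2))) \<circ> int_vec) has_sum T3 u ^ CARD('n)) (UNIV :: (int^'n) set)"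
    by (simp add: o_def Z_term T3_def)
  then show ?thesis by (subst has_sum_reindex[OF inj_int_vec[THEN inj_on_subset, OF subset_UNIV]])
qed

lemma Z_theta:
  assumes u: "u > 0"
  shows "theta_series (range (int_vec :: int^'n::finite \<Rightarrow> real^'n)) (\<i> * complex_of_real u) = complex_of_real (T3 u ^ CARD('n))"
  unfolding theta_series_def theta_term_eq by (rule infsum_of_real_has_sum[OF Z_theta_real[OF u]])

definition PA :: "(bool^'n) set \<Rightarrow> real \<Rightarrow> real" where
  "PA C u = (\<Sum>c\<in>C. \<Prod>j\<in>UNIV. if c$j then T2 (2*u) else T3 (2*u))"

lemma A_theta_real:
  assumes u: "u > 0"
  shows "((\<lambda>l. exp (-(pi * u * (norm l)^2))) has_sum PA C u) (constructionA (C :: (bool^'n::finite) set))"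
proof -
  have cA: "constructionA C = (\<Union>c\<in>C. range (Phi c))"
    by (auto simp: constructionA_def Phi_def)
  have each: "((\<lambda>l. exp (-(pi * u * (norm l)^2))) has_sum (\<Prod>j\<in>UNIV. if c$j then T2 (2*u) else T3 (2*u))) (range (Phi c))"
    for c :: "bool^'n"
  proof -
    have u2: "2*u > 0" using u by simp
    have "((\<lambda>z::int^'n. \<Prod>j\<in>UNIV. ee (2*u) (of_int (z$j) + (\<lambda>j. if c$j then 1/2 else 0) j)) has_sum
           (\<Prod>j\<in>UNIV. infsum (\<lambda>m::int. ee (2*u) (of_int m + (\<lambda>j. if c$j then 1/2 else 0) j)) UNIV)) UNIV"
      by (rule theta_shift[OF u2]) simp
    moreover have "infsum (\<lambda>m::int. ee (2*u) (of_int m + (if c$j then 1/2 else 0))) UNIV = (if c$j then T2 (2*u) else T3 (2*u))" for j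
      by (simp add: T2_def T3_def)
    ultimately have "(((\<lambda>l. exp (-(pi * u * (norm l)^2))) \<circ> Phi c) has_sum (\<Prod>j\<in>UNIV. if c$j then T2 (2*u) else T3 (2*u))) UNIV"
      by (simp add: o_def Phi_term)
    moreover have "inj_on (Phi c) UNIV" by (rule inj_onI) (use Phi_eq in blast)
    ultimately show ?thesis by (subst has_sum_reindex) auto
  qed
  have "((\<lambda>l. exp (-(pi * u * (norm l)^2))) has_sum PA C u) (\<Union>c\<in>C. range (Phi c))"
    unfolding PA_def
  proof (rule sum_has_sum)
    fix c c' assume "c \<in> C" "c' \<in> C" "c \<noteq> c'"
    then show "range (Phi c) \<inter> range (Phi c') = {}" using Phi_eq by blast
  qed (simp_all add: each)
  then show ?thesis using cA by simp
qed

lemma A_theta: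
  assumes u: "u > 0"
  shows "theta_series (constructionA (C :: (bool^'n::finite) set)) (\<i> * complex_of_real u) = complex_of_real (PA C u)"
  unfolding theta_series_def theta_term_eq by (rule infsum_of_real_has_sum[OF A_theta_real[OF u]])

lemma prod_bits:
  "(\<Prod>j\<in>UNIV. if (c::bool^'n::finite)$j then y else x) = y ^ hamming_weight c * x ^ (CARD('n) - hamming_weight c)"
proof -
  have "(\<Prod>j\<in>UNIV. if c$j then y else x) = (\<Prod>j\<in>UNIV \<inter> {j. c$j}. y) * (\<Prod>j\<in>UNIV \<inter> - {j. c$j}. x)"
    by (rule prod.If_cases) simp
  also have "\<dots> = y ^ card {j. c$j} * x ^ card (- {j. c$j})" by simp
  also have "card (- {j. c$j}) = CARD('n) - card {j. c$j}"
  proof -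
    have "card (- {j. c$j}) = card (UNIV - {j. c$j})" by (simp add: Compl_eq_Diff_UNIV)
    also have "\<dots> = CARD('n) - card {j. c$j}" by (rule card_Diff_subset) simp_all
    finally show ?thesis .
  qed
  finally show ?thesis by (simp add: hamming_weight_def)
qed

lemma sum_prod_weight:
  "(\<Sum>c\<in>(C :: (bool^'n::finite) set). \<Prod>j\<in>UNIV. if c$j then y else x) = weight_enum C x y"
proof -
  let ?h = "\<lambda>c::bool^'n. y ^ hamming_weight c * x ^ (CARD('n) - hamming_weight c)"
  have "(\<Sum>c\<in>C. \<Prod>j\<in>UNIV. if c$j then y else x) = (\<Sum>c\<in>C. ?h c)" by (simp add: prod_bits)
  also have "\<dots> = (\<Sum>w\<in>{0..CARD('n)}. \<Sum>c\<in>{c\<in>C. hamming_weight c = w}. ?h c)"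
    by (rule sum.group[symmetric]) (auto simp: hw_le)
  also have "\<dots> = (\<Sum>w\<in>{0..CARD('n)}. real (weight_dist C w) * x ^ (CARD('n) - w) * y ^ w)"
  proof (rule sum.cong)
    fix w
    have "(\<Sum>c\<in>{c\<in>C. hamming_weight c = w}. ?h c) = (\<Sum>c\<in>{c\<in>C. hamming_weight c = w}. y ^ w * x ^ (CARD('n) - w))"
      by (rule sum.cong) auto
    also have "\<dots> = real (weight_dist C w) * x ^ (CARD('n) - w) * y ^ w"
      by (simp add: weight_dist_def mult_ac)
    finally show "(\<Sum>c\<in>{c\<in>C. hamming_weight c = w}. ?h c) = real (weight_dist C w) * x ^ (CARD('n) - w) * y ^ w" .
  qed simp
  finally show ?thesis by (simp add: weight_enum_def)
qed

lemma weight_enum_scale: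
  "weight_enum (C :: (bool^'n::finite) set) (k*x) (k*y) = k ^ CARD('n) * weight_enum C x y"
proof -
  have "weight_enum C (k*x) (k*y) = (\<Sum>w = 0..CARD('n). k ^ CARD('n) * (real (weight_dist C w) * x ^ (CARD('n) - w) * y ^ w))"
    unfolding weight_enum_def
  proof (rule sum.cong)
    fix w assume "w \<in> {0..CARD('n)}"
    then have "CARD('n) - w + w = CARD('n)" by simp
    then have "k ^ (CARD('n) - w) * k ^ w = k ^ CARD('n)" by (metis power_add)
    then show "real (weight_dist C w) * (k*x) ^ (CARD('n) - w) * (k*y) ^ w = k ^ CARD('n) * (real (weight_dist C w) * x ^ (CARD('n) - w) * y ^ w)"
      by (simp add: power_mult_distrib mult_ac)
  qed simp
  then show ?thesis by (simp add: weight_enum_def sum_distrib_left)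
qed

lemma sqrt_factor:
  assumes x: "x > 0" and a: "a > 0" and r: "r \<ge> 0" and e: "x^2 = a^2 * r"
  shows "x = a * sqrt r"
proof -
  have "x = sqrt (x^2)" using x by simp
  also have "\<dots> = sqrt (a^2) * sqrt r" by (simp add: e real_sqrt_mult)
  also have "sqrt (a^2) = a" using a by simp
  finally show ?thesis .
qed

lemma two_powr_half: "2 powr (real n / 2) * sqrt (1/2) ^ n = 1"
proof -
  have "2 powr (real n / 2) = (2 powr (1/2)) powr (real n)" by (simp add: powr_powr)
  also have "2 powr (1/2) = sqrt (2::real)" by (simp add: powr_half_sqrt)
  also have "sqrt 2 powr (real n) = sqrt 2 ^ n" by (simp add: powr_realpow)
  finally have "2 powr (real n / 2) * sqrt (1/2) ^ n = (sqrt 2 * sqrt (1/2)) ^ n"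
    by (simp add: power_mult_distrib)
  also have "sqrt 2 * sqrt (1/2) = (1::real)" by (simp add: real_sqrt_mult[symmetric])
  finally show ?thesis by simp
qed

lemma T2_T3_formula:
  assumes u: "u > 0"
  shows "T3 (2*u) = T3 u * sqrt (1/2) * sqrt (1 + tt u)"
    and "T2 (2*u) = T3 u * sqrt (1/2) * sqrt (1 - tt u)"
proof -
  define a where "a = T3 u"
  define b where "b = T4 u"
  have a: "a > 0" using T3_pos[OF u] by (simp add: a_def)
  have t: "tt u = (b/a)^2" by (simp add: tt_def a_def b_def)
  have t1: "tt u < 1" "tt u > 0" using tt_lt1[OF u] tt_pos[OF u] by auto
  have s: "T3 (2*u)^2 = (a^2 + b^2) / 2" using T3_T4_sum[OF u] by (simp add: a_def b_def)
  have d: "T2 (2*u)^2 = (a^2 - b^2) / 2" using T3_T4_diff[OF u] by (simp add: a_def b_def)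
  have "T3 (2*u)^2 = a^2 * ((1 + tt u)/2)" unfolding s t using a by (simp add: field_simps power_divide)
  moreover have "T3 (2*u) > 0" using T3_pos[of "2*u"] u by simp
  moreover have "(1 + tt u)/2 \<ge> 0" using t1 by simp
  ultimately have "T3 (2*u) = a * sqrt ((1 + tt u)/2)"
    using sqrt_factor[OF _ a] by blast
  also have "sqrt ((1 + tt u)/2) = sqrt (1/2) * sqrt (1 + tt u)" by (simp add: real_sqrt_mult[symmetric])
  finally show "T3 (2*u) = T3 u * sqrt (1/2) * sqrt (1 + tt u)" by (simp add: a_def mult.assoc)
  have "T2 (2*u)^2 = a^2 * ((1 - tt u)/2)" unfolding d t using a by (simp add: field_simps power_divide)
  moreover have "T2 (2*u) > 0" using T2_pos[of "2*u"] u by simp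
  moreover have "(1 - tt u)/2 \<ge> 0" using t1 by simp
  ultimately have "T2 (2*u) = a * sqrt ((1 - tt u)/2)"
    using sqrt_factor[OF _ a] by blast
  also have "sqrt ((1 - tt u)/2) = sqrt (1/2) * sqrt (1 - tt u)" by (simp add: real_sqrt_mult[symmetric])
  finally show "T2 (2*u) = T3 u * sqrt (1/2) * sqrt (1 - tt u)" by (simp add: a_def mult.assoc)
qed

lemma PA_formula:
  fixes C :: "(bool^'n::finite) set"
  assumes u: "u > 0"
  shows "PA C u / T3 u ^ CARD('n) = f_code C (tt u) / 2 powr (real CARD('n) / 2)"
proof -
  have a: "T3 u > 0" using T3_pos[OF u] .
  have "PA C u = weight_enum C (T3 (2*u)) (T2 (2*u))"
    unfolding PA_def by (rule sum_prod_weight)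
  also have "\<dots> = weight_enum C ((T3 u * sqrt (1/2)) * sqrt (1 + tt u)) ((T3 u * sqrt (1/2)) * sqrt (1 - tt u))"
    using T2_T3_formula[OF u] by simp
  also have "\<dots> = (T3 u * sqrt (1/2)) ^ CARD('n) * f_code C (tt u)"
    unfolding f_code_def by (rule weight_enum_scale)
  finally have "PA C u / T3 u ^ CARD('n) = sqrt (1/2) ^ CARD('n) * f_code C (tt u)"
    using a by (simp add: power_mult_distrib)
  also have "sqrt (1/2) ^ CARD('n) = 1 / 2 powr (real CARD('n) / 2)"
    using two_powr_half[of "CARD('n)"] by (simp add: field_simps)
  finally show ?thesis by simp
qed

lemma PA_pos:
  assumes C: "binary_linear_code C" and u: "u > 0"
  shows "PA C u > 0"
  unfolding PA_def
proof (rule sum_pos)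
  show "finite C" by simp
  show "C \<noteq> {}" using lin_zero[OF C] by auto
  fix c assume "c \<in> C"
  show "0 < (\<Prod>j\<in>UNIV. if c$j then T2 (2*u) else T3 (2*u))"
    by (rule prod_pos) (use T2_pos[of "2*u"] T3_pos[of "2*u"] u in auto)
qed

lemma secrecy_formula:
  fixes C :: "(bool^'n::finite) set"
  assumes F: "formally_self_dual C" and u: "u > 0"
  shows "secrecy_function (constructionA C) u = complex_of_real (T3 u ^ CARD('n) / PA C u)"
proof -
  have "root CARD('n) (lattice_volume (constructionA C)) = 1"
    using vol_one[OF F] by simp
  moreover have "scaled_Zn 1 = range (int_vec :: int^'n \<Rightarrow> real^'n)"
    by (simp add: scaled_Zn_def)
  moreover have z: "theta_series (range (int_vec :: int^'n \<Rightarrow> real^'n)) (\<i> * complex_of_real u) = complex_of_real (T3 u ^ CARD('n))"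
    by (rule Z_theta[OF u])
  ultimately show ?thesis
    unfolding secrecy_function_def using A_theta[OF u, of C]
    by (simp add: of_real_divide)
qed

theorem theorem2:
  fixes C :: "(bool^'n) set"
  assumes "formally_self_dual C"
  shows "(\<forall>\<tau>>0. theta_ratio \<tau> \<in> \<real> \<and> 0 < Re (theta_ratio \<tau>) \<and> Re (theta_ratio \<tau>) < 1 \<and>
            inverse (secrecy_function (constructionA C) \<tau>) =
              complex_of_real (f_code C (Re (theta_ratio \<tau>)) / 2 powr (real CARD('n) / 2)))
       \<and> (\<lambda>\<tau>. Re (theta_ratio \<tau>)) ` {0<..} = {0<..<1}
       \<and> (\<forall>\<tau>0>0. (\<forall>\<tau>>0. Re (secrecy_function (constructionA C) \<tau>)
                              \<le> Re (secrecy_function (constructionA C) \<tau>0))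
                 \<longleftrightarrow> (\<forall>t\<in>{0<..<1}. f_code C (Re (theta_ratio \<tau>0)) \<le> f_code C t))"
proof -
  note F = assms
  have C: "binary_linear_code C" using F by (simp add: formally_self_dual_def)
  define K where "K = 2 powr (real CARD('n) / 2)"
  have K: "K > 0" by (simp add: K_def)
  have Re_th: "Re (theta_ratio u) = tt u" if "u > 0" for u using theta_ratio_real[OF that] by simp
  have inv: "inverse (secrecy_function (constructionA C) u) = complex_of_real (f_code C (tt u) / K)" if u: "u > 0" for u
  proof -
    have "inverse (secrecy_function (constructionA C) u) = complex_of_real (PA C u / T3 u ^ CARD('n))"
      using secrecy_formula[OF F u] PA_pos[OF C u] T3_pos[OF u] by (simp add: of_real_inverse[symmetric])
    then show ?thesis using PA_formula[OF u, of C] by (simp add: K_def)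
  qed
  have fpos: "f_code C (tt u) > 0" if u: "u > 0" for u
  proof -
    have "PA C u / T3 u ^ CARD('n) > 0" using PA_pos[OF C u] T3_pos[OF u] by simp
    then have "f_code C (tt u) / K > 0" using PA_formula[OF u, of C] by (simp add: K_def)
    then show ?thesis using K by (simp add: zero_less_divide_iff)
  qed
  have ReS: "Re (secrecy_function (constructionA C) u) = K / f_code C (tt u)" if u: "u > 0" for u
  proof -
    have "secrecy_function (constructionA C) u = inverse (complex_of_real (f_code C (tt u) / K))"
      using inv[OF u] by (metis inverse_inverse_eq)
    also have "\<dots> = complex_of_real (K / f_code C (tt u))" by (simp add: of_real_inverse[symmetric])
    finally show ?thesis by simp
  qed
  have part1: "\<forall>\<tau>>0. theta_ratio \<tau> \<in> \<real> \<and> 0 < Re (theta_ratio \<tau>) \<and> Re (theta_ratio \<tau>) < 1 \<and>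
            inverse (secrecy_function (constructionA C) \<tau>) =
              complex_of_real (f_code C (Re (theta_ratio \<tau>)) / 2 powr (real CARD('n) / 2))"
  proof (intro allI impI conjI)
    fix u :: real assume u: "u > 0"
    show "theta_ratio u \<in> \<real>" using theta_ratio_real[OF u] by simp
    show "0 < Re (theta_ratio u)" using Re_th[OF u] tt_pos[OF u] by simp
    show "Re (theta_ratio u) < 1" using Re_th[OF u] tt_lt1[OF u] by simp
    show "inverse (secrecy_function (constructionA C) u) =
              complex_of_real (f_code C (Re (theta_ratio u)) / 2 powr (real CARD('n) / 2))"
      using inv[OF u] Re_th[OF u] by (simp add: K_def)
  qed
  have img: "(\<lambda>\<tau>. Re (theta_ratio \<tau>)) ` {0<..} = tt ` {0<..}"
    by (rule image_cong) (auto simp: Re_th)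
  have part2: "(\<lambda>\<tau>. Re (theta_ratio \<tau>)) ` {0<..} = {0<..<1}"
    using img tt_image by simp
  have part3: "\<forall>\<tau>0>0. (\<forall>\<tau>>0. Re (secrecy_function (constructionA C) \<tau>)
                              \<le> Re (secrecy_function (constructionA C) \<tau>0))
                 \<longleftrightarrow> (\<forall>t\<in>{0<..<1}. f_code C (Re (theta_ratio \<tau>0)) \<le> f_code C t)"
  proof (intro allI impI)
    fix u0 :: real assume u0: "u0 > 0"
    have "(\<forall>\<tau>>0. Re (secrecy_function (constructionA C) \<tau>) \<le> Re (secrecy_function (constructionA C) u0))
          \<longleftrightarrow> (\<forall>\<tau>>0. f_code C (tt u0) \<le> f_code C (tt \<tau>))"
    proof -
      have "Re (secrecy_function (constructionA C) u) \<le> Re (secrecy_function (constructionA C) u0)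
            \<longleftrightarrow> f_code C (tt u0) \<le> f_code C (tt u)" if u: "u > 0" for u
      proof -
        have "Re (secrecy_function (constructionA C) u) \<le> Re (secrecy_function (constructionA C) u0)
             \<longleftrightarrow> K / f_code C (tt u) \<le> K / f_code C (tt u0)" using ReS[OF u] ReS[OF u0] by simp
        also have "\<dots> \<longleftrightarrow> f_code C (tt u0) \<le> f_code C (tt u)"
          using K fpos[OF u] fpos[OF u0] by (simp add: divide_le_eq le_divide_eq field_simps)
        finally show ?thesis .
      qed
      then show ?thesis by auto
    qed
    also have "\<dots> \<longleftrightarrow> (\<forall>t\<in>tt ` {0<..}. f_code C (tt u0) \<le> f_code C t)" by auto
    also have "\<dots> \<longleftrightarrow> (\<forall>t\<in>{0<..<1}. f_code C (Re (theta_ratio u0)) \<le> f_code C t)"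
      using tt_image Re_th[OF u0] by simp
    finally show "(\<forall>\<tau>>0. Re (secrecy_function (constructionA C) \<tau>) \<le> Re (secrecy_function (constructionA C) u0))
          \<longleftrightarrow> (\<forall>t\<in>{0<..<1}. f_code C (Re (theta_ratio u0)) \<le> f_code C t)" .
  qed
  show ?thesis using part1 part2 part3 by blast
qed

end
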